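(* Let $\mathsf{K}$ be a congruence distributive quasivariety such that every nontrivial subalgebra of a member of $\mathsf{K}_{\mathrm{RFSI}}$ belongs to $\mathsf{K}_{\mathrm{RFSI}}$. If $\mathsf{K}$ has the weak ES property, then the variety $\mathbb{V}(\mathsf{K})$ generated by $\mathsf{K}$ is arithmetical, i.e., both congruence distributive and congruence permutable.
   Context: A quasivariety is a class of similar algebras closed under isomorphic copies, subalgebras, direct products and ultraproducts. For $\mathbf{A}\in\mathsf{K}$, $\mathrm{Con}_{\mathsf{K}}(\mathbf{A})$ is the lattice of congruences $\theta$ with $\mathbf{A}/\theta\in\mathsf{K}$; $\mathsf{K}$ is congruence distributive if all these lattices are distributive. $\mathsf{K}_{\mathrm{RFSI}}$ is the class of nontrivial members of $\mathsf{K}$ that are finitely subdirectly irreducible relative to $\mathsf{K}$ (every subdirect embedding into a finite product of members of $\mathsf{K}$ has a projection that is an isomorphism). $\mathsf{K}$ has the weak ES property if every $\mathsf{K}$-epimorphism (homomorphism $f\colon\mathbf{A}\to\mathbf{B}$ in $\mathsf{K}$ with $g\circ f=h\circ f\Rightarrow g=h$ for all homomorphisms $g,h$ from $\mathbf{B}$ into members of $\mathsf{K}$) between finitely generated members is surjective. A variety is congruence permutable if $\theta_1\circ\theta_2=\theta_2\circ\theta_1$ for all congruences of every member. *)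

theory Defs
  imports Main
begin

datatype 'f trm = Var nat | Op 'f "'f trm list"

record ('f, 'a) alg =
  carrier :: "'a set"
  oper :: "'f \<Rightarrow> 'a list \<Rightarrow> 'a"

fun wf_trm :: "('f \<Rightarrow> nat) \<Rightarrow> 'f trm \<Rightarrow> bool" where
  "wf_trm ar (Var n) = True"
| "wf_trm ar (Op f ts) = (length ts = ar f \<and> (\<forall>t\<in>set ts. wf_trm ar t))"

fun eval :: "('f, 'a) alg \<Rightarrow> (nat \<Rightarrow> 'a) \<Rightarrow> 'f trm \<Rightarrow> 'a" where
  "eval A v (Var n) = v n"
| "eval A v (Op f ts) = oper A f (map (eval A v) ts)"

type_synonym 'f eqn = "'f trm \<times> 'f trm"
(* a quasi-identity: (premises, conclusion); an identity has no premises *)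
type_synonym 'f qid = "'f eqn list \<times> 'f eqn"

definition wf_qid :: "('f \<Rightarrow> nat) \<Rightarrow> 'f qid \<Rightarrow> bool" where
  "wf_qid ar q = ((\<forall>e\<in>set (fst q). wf_trm ar (fst e) \<and> wf_trm ar (snd e))
      \<and> wf_trm ar (fst (snd q)) \<and> wf_trm ar (snd (snd q)))"

definition closed_set :: "('f \<Rightarrow> nat) \<Rightarrow> ('f, 'a) alg \<Rightarrow> 'a set \<Rightarrow> bool" where
  "closed_set ar A S = (\<forall>f xs. length xs = ar f \<and> set xs \<subseteq> S \<longrightarrow> oper A f xs \<in> S)"

definition algebra :: "('f \<Rightarrow> nat) \<Rightarrow> ('f, 'a) alg \<Rightarrow> bool" where
  "algebra ar A = (carrier A \<noteq> {} \<and> closed_set ar A (carrier A))"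

definition sat_qid :: "('f, 'a) alg \<Rightarrow> 'f qid \<Rightarrow> bool" where
  "sat_qid A q = (\<forall>v. range v \<subseteq> carrier A \<longrightarrow>
      (\<forall>e\<in>set (fst q). eval A v (fst e) = eval A v (snd e)) \<longrightarrow>
      eval A v (fst (snd q)) = eval A v (snd (snd q)))"

definition in_qv :: "('f \<Rightarrow> nat) \<Rightarrow> 'f qid set \<Rightarrow> ('f, 'a) alg \<Rightarrow> bool" where
  "in_qv ar Qs A = (algebra ar A \<and> (\<forall>q\<in>Qs. sat_qid A q))"

definition hom :: "('f \<Rightarrow> nat) \<Rightarrow> ('f, 'a) alg \<Rightarrow> ('f, 'b) alg \<Rightarrow> ('a \<Rightarrow> 'b) \<Rightarrow> bool" where
  "hom ar A B h = ((\<forall>x\<in>carrier A. h x \<in> carrier B) \<and>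
     (\<forall>f xs. length xs = ar f \<and> set xs \<subseteq> carrier A \<longrightarrow> h (oper A f xs) = oper B f (map h xs)))"

definition congruence :: "('f \<Rightarrow> nat) \<Rightarrow> ('f, 'a) alg \<Rightarrow> ('a \<times> 'a) set \<Rightarrow> bool" where
  "congruence ar A \<theta> = (equiv (carrier A) \<theta> \<and>
     (\<forall>f xs ys. length xs = ar f \<and> length ys = ar f \<and> list_all2 (\<lambda>x y. (x, y) \<in> \<theta>) xs ys
        \<longrightarrow> (oper A f xs, oper A f ys) \<in> \<theta>))"

definition quot :: "('f, 'a) alg \<Rightarrow> ('a \<times> 'a) set \<Rightarrow> ('f, 'a set) alg" where
  "quot A \<theta> = \<lparr>carrier = carrier A // \<theta>,
      oper = (\<lambda>f Xs. \<theta> `` {oper A f (map (\<lambda>X. SOME x. x \<in> X) Xs)})\<rparr>"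

definition Con :: "('f \<Rightarrow> nat) \<Rightarrow> ('f, 'a) alg \<Rightarrow> ('a \<times> 'a) set set" where
  "Con ar A = {\<theta>. congruence ar A \<theta>}"

definition ConK :: "('f \<Rightarrow> nat) \<Rightarrow> 'f qid set \<Rightarrow> ('f, 'a) alg \<Rightarrow> ('a \<times> 'a) set set" where
  "ConK ar Qs A = {\<theta>. congruence ar A \<theta> \<and> in_qv ar Qs (quot A \<theta>)}"

(* join in an intersection-closed family of relations ordered by inclusion (meet = intersection) *)
definition lat_join :: "'r set set \<Rightarrow> 'r set \<Rightarrow> 'r set \<Rightarrow> 'r set" where
  "lat_join L x y = \<Inter>{z\<in>L. x \<union> y \<subseteq> z}"

definition distrib_family :: "'r set set \<Rightarrow> bool" where
  "distrib_family L = (\<forall>x\<in>L. \<forall>y\<in>L. \<forall>z\<in>L. x \<inter> lat_join L y z = lat_join L (x \<inter> y) (x \<inter> z))"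

definition subuniverse :: "('f \<Rightarrow> nat) \<Rightarrow> ('f, 'a) alg \<Rightarrow> 'a set \<Rightarrow> bool" where
  "subuniverse ar A S = (S \<subseteq> carrier A \<and> S \<noteq> {} \<and> closed_set ar A S)"

definition Sg :: "('f \<Rightarrow> nat) \<Rightarrow> ('f, 'a) alg \<Rightarrow> 'a set \<Rightarrow> 'a set" where
  "Sg ar A X = \<Inter>{S. X \<subseteq> S \<and> S \<subseteq> carrier A \<and> closed_set ar A S}"

definition fin_gen :: "('f \<Rightarrow> nat) \<Rightarrow> ('f, 'a) alg \<Rightarrow> bool" where
  "fin_gen ar A = (\<exists>X. finite X \<and> X \<subseteq> carrier A \<and> Sg ar A X = carrier A)"

definition nontrivial :: "('f, 'a) alg \<Rightarrow> bool" where
  "nontrivial A = (\<exists>a\<in>carrier A. \<exists>b\<in>carrier A. a \<noteq> b)"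

(* relatively finitely subdirectly irreducible: nontrivial member of K such that for every
   subdirect embedding a \<mapsto> (h_0 a, ..., h_{n-1} a) into a finite product of members B_i of K
   (surjective homomorphisms h_i, jointly injective), some projection h_i is an isomorphism *)
definition RFSI :: "('f \<Rightarrow> nat) \<Rightarrow> 'f qid set \<Rightarrow> ('f, 'a) alg \<Rightarrow> bool" where
  "RFSI ar Qs A = (in_qv ar Qs A \<and> nontrivial A \<and>
     (\<forall>(n::nat) (B :: nat \<Rightarrow> ('f, 'a) alg) (h :: nat \<Rightarrow> 'a \<Rightarrow> 'a).
        (\<forall>i<n. in_qv ar Qs (B i) \<and> hom ar A (B i) (h i) \<and> h i ` carrier A = carrier (B i)) \<and>
        (\<forall>a\<in>carrier A. \<forall>b\<in>carrier A. (\<forall>i<n. h i a = h i b) \<longrightarrow> a = b)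
        \<longrightarrow> (\<exists>i<n. inj_on (h i) (carrier A))))"

definition K_epi :: "('f \<Rightarrow> nat) \<Rightarrow> 'f qid set \<Rightarrow> ('f, 'a) alg \<Rightarrow> ('f, 'b) alg \<Rightarrow> ('a \<Rightarrow> 'b) \<Rightarrow> bool" where
  "K_epi ar Qs A B f = (hom ar A B f \<and>
     (\<forall>(C :: ('f, 'b) alg) g h. in_qv ar Qs C \<and> hom ar B C g \<and> hom ar B C h \<and>
        (\<forall>x\<in>carrier A. g (f x) = h (f x)) \<longrightarrow> (\<forall>y\<in>carrier B. g y = h y)))"

(* the hypotheses, evaluated for all algebras whose universe lies in the type 'a *)
definition rel_CD :: "('f \<Rightarrow> nat) \<Rightarrow> 'f qid set \<Rightarrow> 'a itself \<Rightarrow> bool" where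
  "rel_CD ar Qs T = (\<forall>A :: ('f, 'a) alg. in_qv ar Qs A \<longrightarrow> distrib_family (ConK ar Qs A))"

definition RFSI_sub_closed :: "('f \<Rightarrow> nat) \<Rightarrow> 'f qid set \<Rightarrow> 'a itself \<Rightarrow> bool" where
  "RFSI_sub_closed ar Qs T = (\<forall>(A :: ('f, 'a) alg) S.
     RFSI ar Qs A \<and> subuniverse ar A S \<and> (\<exists>a\<in>S. \<exists>b\<in>S. a \<noteq> b)
       \<longrightarrow> RFSI ar Qs (A\<lparr>carrier := S\<rparr>))"

definition weak_ES :: "('f \<Rightarrow> nat) \<Rightarrow> 'f qid set \<Rightarrow> 'a itself \<Rightarrow> bool" where
  "weak_ES ar Qs T = (\<forall>(A :: ('f, 'a) alg) (B :: ('f, 'a) alg) f.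
     in_qv ar Qs A \<and> in_qv ar Qs B \<and> fin_gen ar A \<and> fin_gen ar B \<and> K_epi ar Qs A B f
       \<longrightarrow> f ` carrier A = carrier B)"

(* membership in the variety V(K) = Mod(Id(K)): models of all identities valid in K *)
definition in_var_gen :: "('f \<Rightarrow> nat) \<Rightarrow> 'f qid set \<Rightarrow> 'a itself \<Rightarrow> ('f, 'b) alg \<Rightarrow> bool" where
  "in_var_gen ar Qs T B = (algebra ar B \<and>
     (\<forall>s t. wf_trm ar s \<and> wf_trm ar t \<and>
        (\<forall>A :: ('f, 'a) alg. in_qv ar Qs A \<longrightarrow> sat_qid A ([], (s, t)))
        \<longrightarrow> sat_qid B ([], (s, t))))"

end

theory Submission
  imports Defs
begin

fun subst :: "(nat \<Rightarrow> 'f trm) \<Rightarrow> 'f trm \<Rightarrow> 'f trm" where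
  "subst \<sigma> (Var n) = \<sigma> n"
| "subst \<sigma> (Op f ts) = Op f (map (subst \<sigma>) ts)"

lemma eval_subst: "eval A w (subst \<sigma> t) = eval A (\<lambda>n. eval A w (\<sigma> n)) t"
  by (induction t) (auto cong: map_cong)

lemma subst_subst: "subst \<sigma> (subst \<tau> t) = subst (\<lambda>n. subst \<sigma> (\<tau> n)) t"
  by (induction t) auto

lemma wf_subst: "wf_trm ar t \<Longrightarrow> (\<And>n. wf_trm ar (\<sigma> n)) \<Longrightarrow> wf_trm ar (subst \<sigma> t)"
  by (induction t) auto

lemma eval_closed: "closed_set ar A T \<Longrightarrow> range v \<subseteq> T \<Longrightarrow> wf_trm ar t \<Longrightarrow> eval A v t \<in> T"
proof (induction t)
  case (Var n) then show ?case by auto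
next
  case (Op f ts)
  then have "set (map (eval A v) ts) \<subseteq> T" "length (map (eval A v) ts) = ar f" by auto
  then show ?case using Op.prems(1) unfolding closed_set_def by auto
qed

lemma eval_carrier_upd: "eval (A\<lparr>carrier := S\<rparr>) v t = eval A v t"
  by (induction t) (auto cong: map_cong)

lemma hom_eval:
  assumes "hom ar A B k" "algebra ar A" "range v \<subseteq> carrier A"
  shows "wf_trm ar t \<Longrightarrow> k (eval A v t) = eval B (k \<circ> v) t"
proof (induction t)
  case (Var n) then show ?case by auto
next
  case (Op f ts)
  have cl: "\<forall>t\<in>set ts. eval A v t \<in> carrier A"
    using Op.prems assms(2,3) eval_closed[of ar A "carrier A" v] by (auto simp: algebra_def)
  have "set (map (eval A v) ts) \<subseteq> carrier A" "length (map (eval A v) ts) = ar f"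
    using cl Op.prems by auto
  then have "k (eval A v (Op f ts)) = oper B f (map k (map (eval A v) ts))"
    using assms(1) unfolding hom_def by simp
  also have "\<dots> = eval B (k \<circ> v) (Op f ts)"
    using Op by (auto simp: comp_def cong: map_cong)
  finally show ?case .
qed

lemma cong_eval:
  assumes "congruence ar A \<theta>" "\<And>n. (v n, v' n) \<in> \<theta>"
  shows "wf_trm ar t \<Longrightarrow> (eval A v t, eval A v' t) \<in> \<theta>"
proof (induction t)
  case (Var n) then show ?case using assms by auto
next
  case (Op f ts)
  have "list_all2 (\<lambda>x y. (x, y) \<in> \<theta>) (map (eval A v) ts) (map (eval A v') ts)"
    using Op by (auto simp: list.rel_map list_all2_same)
  then show ?case using assms(1) Op.prems unfolding congruence_def by auto
qed

definition kerrel :: "('f, 'a) alg \<Rightarrow> ('a \<Rightarrow> 'b) \<Rightarrow> ('a \<times> 'a) set" where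
  "kerrel A k = {(x, y). x \<in> carrier A \<and> y \<in> carrier A \<and> k x = k y}"

definition kcong :: "('f \<Rightarrow> nat) \<Rightarrow> 'f qid set \<Rightarrow> ('f, 'a) alg \<Rightarrow> ('a \<times> 'a) set \<Rightarrow> bool" where
  "kcong ar Qs A \<theta> = (congruence ar A \<theta> \<and>
     (\<forall>q\<in>Qs. \<forall>v. range v \<subseteq> carrier A \<longrightarrow>
        (\<forall>e\<in>set (fst q). (eval A v (fst e), eval A v (snd e)) \<in> \<theta>) \<longrightarrow>
        (eval A v (fst (snd q)), eval A v (snd (snd q))) \<in> \<theta>))"

lemma ker_kcong:
  assumes Q: "\<forall>q\<in>Qs. wf_qid ar q" and A: "algebra ar A" and h: "hom ar A B k" and B: "in_qv ar Qs B"
  shows "kcong ar Qs A (kerrel A k)"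
proof -
  have clA: "closed_set ar A (carrier A)" using A by (simp add: algebra_def)
  have eq: "equiv (carrier A) (kerrel A k)"
    by (auto simp: equiv_def refl_on_def sym_def trans_def kerrel_def)
  have comp: "(oper A f xs, oper A f ys) \<in> kerrel A k"
    if "length xs = ar f" "length ys = ar f" "list_all2 (\<lambda>x y. (x, y) \<in> kerrel A k) xs ys" for f xs ys
  proof -
    have sx: "set xs \<subseteq> carrier A" and sy: "set ys \<subseteq> carrier A" and m: "map k xs = map k ys"
      using that(3) by (auto simp: kerrel_def list_all2_conv_all_nth set_conv_nth intro!: nth_equalityI)
    have "k (oper A f xs) = oper B f (map k xs)" using h that sx by (auto simp: hom_def)
    also have "\<dots> = oper B f (map k ys)" using m by simp
    also have "\<dots> = k (oper A f ys)" using h that sy by (auto simp: hom_def)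
    finally show ?thesis using clA that sx sy unfolding kerrel_def closed_set_def by auto
  qed
  have qq: "(eval A v (fst (snd q)), eval A v (snd (snd q))) \<in> kerrel A k"
    if q: "q \<in> Qs" and v: "range v \<subseteq> carrier A"
      and pr: "\<forall>e\<in>set (fst q). (eval A v (fst e), eval A v (snd e)) \<in> kerrel A k" for q v
  proof -
    have wq: "wf_qid ar q" using Q q by auto
    have rv: "range (k \<circ> v) \<subseteq> carrier B" using h v by (auto simp: hom_def)
    have "\<forall>e\<in>set (fst q). eval B (k \<circ> v) (fst e) = eval B (k \<circ> v) (snd e)"
    proof
      fix e assume e: "e \<in> set (fst q)"
      then have "k (eval A v (fst e)) = k (eval A v (snd e))" using pr by (auto simp: kerrel_def)
      then show "eval B (k \<circ> v) (fst e) = eval B (k \<circ> v) (snd e)"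
        using hom_eval[OF h A v] wq e by (auto simp: wf_qid_def)
    qed
    then have "eval B (k \<circ> v) (fst (snd q)) = eval B (k \<circ> v) (snd (snd q))"
      using B q rv by (auto simp: in_qv_def sat_qid_def)
    then show ?thesis
      using hom_eval[OF h A v] wq eval_closed[OF clA v] by (auto simp: wf_qid_def kerrel_def)
  qed
  show ?thesis unfolding kcong_def congruence_def using eq comp qq by blast
qed

lemma surj_in_qv:
  assumes Q: "\<forall>q\<in>Qs. wf_qid ar q" and A: "algebra ar A" and h: "hom ar A B k"
    and s: "k ` carrier A = carrier B" and kc: "kcong ar Qs A (kerrel A k)"
  shows "in_qv ar Qs B"
proof -
  define pre where "pre y = (SOME x. x \<in> carrier A \<and> k x = y)" for y
  have pre: "pre y \<in> carrier A \<and> k (pre y) = y" if "y \<in> carrier B" for y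
    using that s unfolding pre_def by (metis (mono_tags, lifting) image_iff someI_ex)
  have clA: "closed_set ar A (carrier A)" using A by (simp add: algebra_def)
  have alg: "algebra ar B"
    unfolding algebra_def closed_set_def
  proof (intro conjI allI impI)
    show "carrier B \<noteq> {}" using A s by (auto simp: algebra_def)
  next
    fix f ys assume a: "length ys = ar f \<and> set ys \<subseteq> carrier B"
    let ?xs = "map pre ys"
    have sx: "set ?xs \<subseteq> carrier A" using a pre by auto
    have m: "map k ?xs = ys" using a pre by (simp add: map_idI subset_iff)
    have "k (oper A f ?xs) = oper B f ys" using h a sx m unfolding hom_def by (metis length_map)
    moreover have "oper A f ?xs \<in> carrier A" using clA a sx by (auto simp: closed_set_def)
    ultimately show "oper B f ys \<in> carrier B" using h by (auto simp: hom_def)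
  qed
  have sat: "sat_qid B q" if q: "q \<in> Qs" for q
    unfolding sat_qid_def
  proof (intro allI impI)
    fix v assume v: "range v \<subseteq> carrier B"
      and pr: "\<forall>e\<in>set (fst q). eval B v (fst e) = eval B v (snd e)"
    define u where "u n = pre (v n)" for n
    have u: "range u \<subseteq> carrier A" using pre v unfolding u_def by auto
    have ku: "k \<circ> u = v" using pre v unfolding u_def by (auto simp: fun_eq_iff image_subset_iff)
    have wq: "wf_qid ar q" using Q q by auto
    have ev: "k (eval A u t) = eval B v t" if "wf_trm ar t" for t
      using hom_eval[OF h A u that] ku by simp
    have "\<forall>e\<in>set (fst q). (eval A u (fst e), eval A u (snd e)) \<in> kerrel A k"
      using pr ev wq eval_closed[OF clA u] by (auto simp: wf_qid_def kerrel_def)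
    then have "(eval A u (fst (snd q)), eval A u (snd (snd q))) \<in> kerrel A k"
      using kc q u unfolding kcong_def by blast
    then show "eval B v (fst (snd q)) = eval B v (snd (snd q))"
      using ev wq by (auto simp: wf_qid_def kerrel_def)
  qed
  show ?thesis using alg sat by (auto simp: in_qv_def)
qed

definition rep :: "('a \<times> 'a) set \<Rightarrow> 'a \<Rightarrow> 'a" where
  "rep \<theta> x = (SOME y. (x, y) \<in> \<theta>)"

definition qrep :: "('f, 'a) alg \<Rightarrow> ('a \<times> 'a) set \<Rightarrow> ('f, 'a) alg" where
  "qrep A \<theta> = \<lparr>carrier = rep \<theta> ` carrier A, oper = (\<lambda>f xs. rep \<theta> (oper A f xs))\<rparr>"

lemma rep_in:
  assumes "equiv S \<theta>" "x \<in> S"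
  shows "(x, rep \<theta> x) \<in> \<theta>" "rep \<theta> x \<in> S"
proof -
  have "(x, x) \<in> \<theta>" using assms by (auto simp: equiv_def refl_on_def)
  then show 1: "(x, rep \<theta> x) \<in> \<theta>" unfolding rep_def by (rule someI)
  then show "rep \<theta> x \<in> S" using assms by (auto simp: equiv_def refl_on_def)
qed

lemma rep_eq:
  assumes "equiv S \<theta>" "x \<in> S" "y \<in> S"
  shows "rep \<theta> x = rep \<theta> y \<longleftrightarrow> (x, y) \<in> \<theta>"
proof
  assume "rep \<theta> x = rep \<theta> y"
  then show "(x, y) \<in> \<theta>" using rep_in[OF assms(1,2)] rep_in[OF assms(1,3)] assms(1)
    unfolding equiv_def by (metis sym_def transE)
next
  assume xy: "(x, y) \<in> \<theta>"
  have "\<And>z. (x, z) \<in> \<theta> \<longleftrightarrow> (y, z) \<in> \<theta>" using xy assms(1)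
    unfolding equiv_def by (metis sym_def transE)
  then show "rep \<theta> x = rep \<theta> y" unfolding rep_def by simp
qed

lemma qrep_hom:
  assumes c: "congruence ar A \<theta>" and A: "algebra ar A"
  shows "hom ar A (qrep A \<theta>) (rep \<theta>)" "rep \<theta> ` carrier A = carrier (qrep A \<theta>)"
    "kerrel A (rep \<theta>) = \<theta>"
proof -
  have eq: "equiv (carrier A) \<theta>" using c by (simp add: congruence_def)
  have clA: "closed_set ar A (carrier A)" using A by (simp add: algebra_def)
  show "hom ar A (qrep A \<theta>) (rep \<theta>)"
    unfolding hom_def
  proof (intro conjI allI impI ballI)
    fix x assume "x \<in> carrier A" then show "rep \<theta> x \<in> carrier (qrep A \<theta>)" by (simp add: qrep_def)
  next
    fix f xs assume a: "length xs = ar f \<and> set xs \<subseteq> carrier A"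
    have l2: "list_all2 (\<lambda>x y. (x, y) \<in> \<theta>) xs (map (rep \<theta>) xs)"
      using a rep_in[OF eq] by (auto simp: list.rel_map list_all2_same)
    have "(oper A f xs, oper A f (map (rep \<theta>) xs)) \<in> \<theta>"
      using c a l2 unfolding congruence_def by auto
    moreover have "oper A f xs \<in> carrier A" "oper A f (map (rep \<theta>) xs) \<in> carrier A"
    proof -
      have "set (map (rep \<theta>) xs) \<subseteq> carrier A" "length (map (rep \<theta>) xs) = ar f" using a rep_in[OF eq] by auto
      then show "oper A f xs \<in> carrier A" "oper A f (map (rep \<theta>) xs) \<in> carrier A"
        using clA a unfolding closed_set_def by auto
    qed
    ultimately show "rep \<theta> (oper A f xs) = oper (qrep A \<theta>) f (map (rep \<theta>) xs)"
      using rep_eq[OF eq] by (simp add: qrep_def)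
  qed
  show "rep \<theta> ` carrier A = carrier (qrep A \<theta>)" by (simp add: qrep_def)
  show "kerrel A (rep \<theta>) = \<theta>"
    using rep_eq[OF eq] eq unfolding kerrel_def equiv_def refl_on_def by auto
qed

lemma qrep_in_qv:
  assumes Q: "\<forall>q\<in>Qs. wf_qid ar q" and A: "algebra ar A" and k: "kcong ar Qs A \<theta>"
  shows "in_qv ar Qs (qrep A \<theta>)"
proof -
  have c: "congruence ar A \<theta>" using k by (simp add: kcong_def)
  show ?thesis using surj_in_qv[OF Q A qrep_hom(1)[OF c A] qrep_hom(2)[OF c A]] qrep_hom(3)[OF c A] k
    by simp
qed

lemma ConK_eq:
  assumes Q: "\<forall>q\<in>Qs. wf_qid ar q" and A: "algebra ar A"
  shows "\<theta> \<in> ConK ar Qs A \<longleftrightarrow> kcong ar Qs A \<theta>"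
proof -
  have main: "hom ar A (quot A \<theta>) (\<lambda>x. \<theta> `` {x}) \<and> (\<lambda>x. \<theta> `` {x}) ` carrier A = carrier (quot A \<theta>)
      \<and> kerrel A (\<lambda>x. \<theta> `` {x}) = \<theta>" if c: "congruence ar A \<theta>"
  proof (intro conjI)
    have eq: "equiv (carrier A) \<theta>" using c by (simp add: congruence_def)
    have clA: "closed_set ar A (carrier A)" using A by (simp add: algebra_def)
    show "hom ar A (quot A \<theta>) (\<lambda>x. \<theta> `` {x})"
      unfolding hom_def
    proof (intro conjI allI impI ballI)
      fix x assume "x \<in> carrier A" then show "\<theta> `` {x} \<in> carrier (quot A \<theta>)"
        by (simp add: quot_def quotientI)
    next
      fix f xs assume a: "length xs = ar f \<and> set xs \<subseteq> carrier A"
      define cc where "cc x = (SOME y. y \<in> \<theta> `` {x})" for x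
      have ccin: "(x, cc x) \<in> \<theta>" if "x \<in> carrier A" for x
      proof -
        have "x \<in> \<theta> `` {x}" using eq that by (auto simp: equiv_def refl_on_def)
        then have "cc x \<in> \<theta> `` {x}" unfolding cc_def by (rule someI)
        then show ?thesis by simp
      qed
      have l2: "list_all2 (\<lambda>x y. (x, y) \<in> \<theta>) xs (map cc xs)"
        using a ccin by (auto simp: list.rel_map list_all2_same)
      have "(oper A f xs, oper A f (map cc xs)) \<in> \<theta>"
        using c a l2 unfolding congruence_def by auto
      then have "\<theta> `` {oper A f xs} = \<theta> `` {oper A f (map cc xs)}"
        using eq by (simp add: equiv_class_eq)
      moreover have me: "map (\<lambda>X. SOME x. x \<in> X) (map (\<lambda>x. \<theta> `` {x}) xs) = map cc xs"
        unfolding cc_def map_map comp_def by (rule refl)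
      moreover have o1: "oper (quot A \<theta>) f (map (\<lambda>x. \<theta> `` {x}) xs) = \<theta> `` {oper A f (map (\<lambda>X. SOME x. x \<in> X) (map (\<lambda>x. \<theta> `` {x}) xs))}"
        by (simp only: quot_def alg.select_convs)
      ultimately show "\<theta> `` {oper A f xs} = oper (quot A \<theta>) f (map (\<lambda>x. \<theta> `` {x}) xs)"
        by (simp only:)
    qed
    show "(\<lambda>x. \<theta> `` {x}) ` carrier A = carrier (quot A \<theta>)"
      unfolding quot_def quotient_def by auto
    show "kerrel A (\<lambda>x. \<theta> `` {x}) = \<theta>"
      using eq_equiv_class_iff[OF eq] eq unfolding kerrel_def equiv_def refl_on_def by auto
  qed
  show ?thesis
  proof
    assume "\<theta> \<in> ConK ar Qs A"
    then have c: "congruence ar A \<theta>" and i: "in_qv ar Qs (quot A \<theta>)" by (auto simp: ConK_def)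
    show "kcong ar Qs A \<theta>" using ker_kcong[OF Q A _ i] main[OF c] by metis
  next
    assume k: "kcong ar Qs A \<theta>"
    then have c: "congruence ar A \<theta>" by (simp add: kcong_def)
    then show "\<theta> \<in> ConK ar Qs A" using surj_in_qv[OF Q A, of "quot A \<theta>" "\<lambda>x. \<theta> `` {x}"] main[OF c] k
      by (simp add: ConK_def)
  qed
qed

lemma kcongI:
  assumes "equiv (carrier A) \<theta>"
    and "\<And>f xs ys. length xs = ar f \<Longrightarrow> length ys = ar f \<Longrightarrow> list_all2 (\<lambda>x y. (x, y) \<in> \<theta>) xs ys \<Longrightarrow> (oper A f xs, oper A f ys) \<in> \<theta>"
    and "\<And>q v. q \<in> Qs \<Longrightarrow> range v \<subseteq> carrier A \<Longrightarrow> \<forall>e\<in>set (fst q). (eval A v (fst e), eval A v (snd e)) \<in> \<theta> \<Longrightarrow> (eval A v (fst (snd q)), eval A v (snd (snd q))) \<in> \<theta>"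
  shows "kcong ar Qs A \<theta>"
  using assms unfolding kcong_def congruence_def by simp

lemma kcong_equiv: "kcong ar Qs A \<theta> \<Longrightarrow> equiv (carrier A) \<theta>"
  unfolding kcong_def congruence_def by simp

lemma kcong_compat: "kcong ar Qs A \<theta> \<Longrightarrow> length xs = ar f \<Longrightarrow> length ys = ar f \<Longrightarrow> list_all2 (\<lambda>x y. (x, y) \<in> \<theta>) xs ys \<Longrightarrow> (oper A f xs, oper A f ys) \<in> \<theta>"
  unfolding kcong_def congruence_def by simp

lemma kcong_cong: "kcong ar Qs A \<theta> \<Longrightarrow> congruence ar A \<theta>"
  unfolding kcong_def by simp

lemma kcong_qid: "kcong ar Qs A \<theta> \<Longrightarrow> q \<in> Qs \<Longrightarrow> range v \<subseteq> carrier A \<Longrightarrow> \<forall>e\<in>set (fst q). (eval A v (fst e), eval A v (snd e)) \<in> \<theta> \<Longrightarrow> (eval A v (fst (snd q)), eval A v (snd (snd q))) \<in> \<theta>"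
  unfolding kcong_def by simp

lemma kcong_sub: "kcong ar Qs A \<theta> \<Longrightarrow> \<theta> \<subseteq> carrier A \<times> carrier A"
  using kcong_equiv unfolding equiv_def refl_on_def by blast

lemma equiv_Inter:
  assumes "F \<noteq> {}" "\<forall>\<theta>\<in>F. equiv S \<theta>"
  shows "equiv S (\<Inter>F)"
proof -
  have sub: "\<forall>\<theta>\<in>F. \<theta> \<subseteq> S \<times> S" and rf: "\<forall>\<theta>\<in>F. \<forall>x\<in>S. (x, x) \<in> \<theta>"
    and sy: "\<forall>\<theta>\<in>F. sym \<theta>" and tr: "\<forall>\<theta>\<in>F. trans \<theta>"
    using assms(2) unfolding equiv_def refl_on_def by blast+
  have "\<Inter>F \<subseteq> S \<times> S" using sub assms(1) by blast
  moreover have "\<forall>x\<in>S. (x, x) \<in> \<Inter>F" using rf by blast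
  moreover have "sym (\<Inter>F)" using sy unfolding sym_def by blast
  moreover have "trans (\<Inter>F)" using tr unfolding trans_def by blast
  ultimately show ?thesis unfolding equiv_def refl_on_def by blast
qed

lemma kcong_Inter:
  assumes F: "F \<noteq> {}" "\<forall>\<theta>\<in>F. kcong ar Qs A \<theta>"
  shows "kcong ar Qs A (\<Inter>F)"
proof -
  have eqs: "\<forall>\<theta>\<in>F. equiv (carrier A) \<theta>" using F(2) kcong_equiv by blast
  have "equiv (carrier A) (\<Inter>F)" using equiv_Inter[OF F(1) eqs] .
  moreover have "(oper A f xs, oper A f ys) \<in> \<Inter>F"
    if "length xs = ar f" "length ys = ar f" "list_all2 (\<lambda>x y. (x, y) \<in> \<Inter>F) xs ys" for f xs ys
  proof
    fix \<theta> assume th: "\<theta> \<in> F"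
    have l: "list_all2 (\<lambda>x y. (x, y) \<in> \<theta>) xs ys"
      using that(3) by (rule list_all2_mono) (use th in blast)
    have k: "kcong ar Qs A \<theta>" using F(2) th by blast
    show "(oper A f xs, oper A f ys) \<in> \<theta>" by (rule kcong_compat[OF k that(1,2) l])
  qed
  moreover have "(eval A v (fst (snd q)), eval A v (snd (snd q))) \<in> \<Inter>F"
    if "q \<in> Qs" "range v \<subseteq> carrier A" "\<forall>e\<in>set (fst q). (eval A v (fst e), eval A v (snd e)) \<in> \<Inter>F" for q v
  proof
    fix \<theta> assume th: "\<theta> \<in> F"
    have k: "kcong ar Qs A \<theta>" using F(2) th by blast
    have "\<forall>e\<in>set (fst q). (eval A v (fst e), eval A v (snd e)) \<in> \<theta>" using that(3) th by blast
    then show "(eval A v (fst (snd q)), eval A v (snd (snd q))) \<in> \<theta>"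
      by (rule kcong_qid[OF k that(1,2)])
  qed
  ultimately show ?thesis by (rule kcongI)
qed

lemma kcong_top:
  assumes A: "algebra ar A" and Q: "\<forall>q\<in>Qs. wf_qid ar q"
  shows "kcong ar Qs A (carrier A \<times> carrier A)"
proof -
  have clA: "closed_set ar A (carrier A)" using A by (simp add: algebra_def)
  have "equiv (carrier A) (carrier A \<times> carrier A)"
    by (auto simp: equiv_def refl_on_def sym_def trans_def)
  moreover have "(oper A f xs, oper A f ys) \<in> carrier A \<times> carrier A"
    if "length xs = ar f" "length ys = ar f" "list_all2 (\<lambda>x y. (x, y) \<in> carrier A \<times> carrier A) xs ys" for f xs ys
  proof -
    have "set xs \<subseteq> carrier A \<and> set ys \<subseteq> carrier A" using that(3)
      by (induction rule: list_all2_induct) auto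
    then have "set xs \<subseteq> carrier A" "set ys \<subseteq> carrier A" by auto
    then show ?thesis using clA that unfolding closed_set_def by auto
  qed
  moreover have "(eval A v (fst (snd q)), eval A v (snd (snd q))) \<in> carrier A \<times> carrier A"
    if "q \<in> Qs" "range v \<subseteq> carrier A" "\<forall>e\<in>set (fst q). (eval A v (fst e), eval A v (snd e)) \<in> carrier A \<times> carrier A" for q v
    using eval_closed[OF clA that(2)] Q that(1) by (auto simp: wf_qid_def)
  ultimately show ?thesis by (rule kcongI)
qed

lemma kcong_Id:
  assumes A: "in_qv ar Qs A" and Q: "\<forall>q\<in>Qs. wf_qid ar q"
  shows "kcong ar Qs A (Id_on (carrier A))"
proof -
  have clA: "closed_set ar A (carrier A)" using A by (simp add: algebra_def in_qv_def)
  have "equiv (carrier A) (Id_on (carrier A))"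
    by (auto simp: equiv_def refl_on_def sym_def trans_def)
  moreover have "(oper A f xs, oper A f ys) \<in> Id_on (carrier A)"
    if "length xs = ar f" "length ys = ar f" "list_all2 (\<lambda>x y. (x, y) \<in> Id_on (carrier A)) xs ys" for f xs ys
  proof -
    have "xs = ys \<and> set xs \<subseteq> carrier A" using that(3)
      by (induction rule: list_all2_induct) auto
    then have "xs = ys" "set xs \<subseteq> carrier A" by auto
    then show ?thesis using clA that unfolding closed_set_def by auto
  qed
  moreover have "(eval A v (fst (snd q)), eval A v (snd (snd q))) \<in> Id_on (carrier A)"
    if "q \<in> Qs" "range v \<subseteq> carrier A" "\<forall>e\<in>set (fst q). (eval A v (fst e), eval A v (snd e)) \<in> Id_on (carrier A)" for q v
  proof -
    have "\<forall>e\<in>set (fst q). eval A v (fst e) = eval A v (snd e)" using that(3) by auto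
    then have "eval A v (fst (snd q)) = eval A v (snd (snd q))"
      using A that(1,2) unfolding in_qv_def sat_qid_def by blast
    then show ?thesis using eval_closed[OF clA that(2)] Q that(1) by (auto simp: wf_qid_def)
  qed
  ultimately show ?thesis by (rule kcongI)
qed

lemma chain_fin:
  assumes "finite P" "C \<noteq> {}" "chain\<^sub>\<subseteq> C" "P \<subseteq> \<Union>C"
  shows "\<exists>\<theta>\<in>C. P \<subseteq> \<theta>"
  using assms
proof (induction P rule: finite_induct)
  case empty then show ?case by auto
next
  case (insert x P)
  then obtain \<theta>1 where t1: "\<theta>1 \<in> C" "P \<subseteq> \<theta>1" by auto
  obtain \<theta>2 where t2: "\<theta>2 \<in> C" "x \<in> \<theta>2" using insert.prems by auto
  have "\<theta>1 \<subseteq> \<theta>2 \<or> \<theta>2 \<subseteq> \<theta>1" using insert.prems(2) t1 t2 unfolding chain_subset_def by auto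
  then show ?case
  proof
    assume "\<theta>1 \<subseteq> \<theta>2" then show ?case using t1 t2 by auto
  next
    assume "\<theta>2 \<subseteq> \<theta>1" then show ?case using t1 t2 by auto
  qed
qed

lemma equiv_chain:
  assumes C: "C \<noteq> {}" "chain\<^sub>\<subseteq> C" and eqs: "\<forall>\<theta>\<in>C. equiv S \<theta>"
  shows "equiv S (\<Union>C)"
proof -
  have sub: "\<forall>\<theta>\<in>C. \<theta> \<subseteq> S \<times> S" and rf: "\<forall>\<theta>\<in>C. \<forall>x\<in>S. (x, x) \<in> \<theta>"
    and sy: "\<forall>\<theta>\<in>C. sym \<theta>" and tr: "\<forall>\<theta>\<in>C. trans \<theta>"
    using eqs unfolding equiv_def refl_on_def by blast+
  have "\<Union>C \<subseteq> S \<times> S" using sub by blast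
  moreover have "\<forall>x\<in>S. (x, x) \<in> \<Union>C" using rf C(1) by blast
  moreover have "sym (\<Union>C)" using sy unfolding sym_def by blast
  moreover have "trans (\<Union>C)"
    unfolding trans_def
  proof (intro allI impI)
    fix x y z assume a: "(x, y) \<in> \<Union>C" "(y, z) \<in> \<Union>C"
    then have "{(x, y), (y, z)} \<subseteq> \<Union>C" by blast
    then obtain \<theta> where th: "\<theta> \<in> C" "{(x, y), (y, z)} \<subseteq> \<theta>" using chain_fin[OF _ C(1,2)] by (meson finite.emptyI finite_insert)
    then have "(x, z) \<in> \<theta>" using tr unfolding trans_def by blast
    then show "(x, z) \<in> \<Union>C" using th by blast
  qed
  ultimately show ?thesis unfolding equiv_def refl_on_def by blast
qed

lemma kcong_chain:
  assumes C: "C \<noteq> {}" "chain\<^sub>\<subseteq> C" "\<forall>\<theta>\<in>C. kcong ar Qs A \<theta>"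
  shows "kcong ar Qs A (\<Union>C)"
proof -
  have eqs: "\<forall>\<theta>\<in>C. equiv (carrier A) \<theta>" using C(3) kcong_equiv by blast
  have "equiv (carrier A) (\<Union>C)" by (rule equiv_chain[OF C(1,2) eqs])
  moreover have "(oper A f xs, oper A f ys) \<in> \<Union>C"
    if "length xs = ar f" "length ys = ar f" "list_all2 (\<lambda>x y. (x, y) \<in> \<Union>C) xs ys" for f xs ys
  proof -
    have "set (zip xs ys) \<subseteq> \<Union>C" using that(3) by (auto simp: list_all2_iff)
    then obtain \<theta> where th: "\<theta> \<in> C" "set (zip xs ys) \<subseteq> \<theta>" using chain_fin[OF finite_set C(1,2)] by blast
    then have "list_all2 (\<lambda>x y. (x, y) \<in> \<theta>) xs ys" using that by (auto simp: list_all2_iff)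
    moreover have k: "kcong ar Qs A \<theta>" using C(3) th by blast
    ultimately have "(oper A f xs, oper A f ys) \<in> \<theta>" using kcong_compat[OF k that(1,2)] by blast
    then show ?thesis using th by auto
  qed
  moreover have "(eval A v (fst (snd q)), eval A v (snd (snd q))) \<in> \<Union>C"
    if "q \<in> Qs" "range v \<subseteq> carrier A" "\<forall>e\<in>set (fst q). (eval A v (fst e), eval A v (snd e)) \<in> \<Union>C" for q v
  proof -
    let ?P = "(\<lambda>e. (eval A v (fst e), eval A v (snd e))) ` set (fst q)"
    have "?P \<subseteq> \<Union>C" using that(3) by auto
    moreover have "finite ?P" by simp
    ultimately obtain \<theta> where th: "\<theta> \<in> C" "?P \<subseteq> \<theta>" using chain_fin[OF _ C(1,2)] by blast
    moreover have k: "kcong ar Qs A \<theta>" using C(3) th by blast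
    ultimately have "\<forall>e\<in>set (fst q). (eval A v (fst e), eval A v (snd e)) \<in> \<theta>" by blast
    then have "(eval A v (fst (snd q)), eval A v (snd (snd q))) \<in> \<theta>"
      by (rule kcong_qid[OF k that(1,2)])
    then show ?thesis using th by auto
  qed
  ultimately show ?thesis by (rule kcongI)
qed

lemma closed_set_upd: "closed_set ar (A\<lparr>carrier := S\<rparr>) T = closed_set ar A T"
  by (simp add: closed_set_def)

lemma sub_in_qv:
  assumes "in_qv ar Qs A" "subuniverse ar A S"
  shows "in_qv ar Qs (A\<lparr>carrier := S\<rparr>)"
  using assms unfolding in_qv_def algebra_def subuniverse_def sat_qid_def
  by (auto simp: closed_set_upd eval_carrier_upd)

lemma Sg_props:
  assumes A: "algebra ar A" and X: "X \<subseteq> carrier A"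
  shows "X \<subseteq> Sg ar A X" "Sg ar A X \<subseteq> carrier A" "closed_set ar A (Sg ar A X)"
proof -
  show "X \<subseteq> Sg ar A X" unfolding Sg_def by blast
  have "carrier A \<in> {S. X \<subseteq> S \<and> S \<subseteq> carrier A \<and> closed_set ar A S}" using A X by (simp add: algebra_def)
  then show "Sg ar A X \<subseteq> carrier A" unfolding Sg_def by blast
  show "closed_set ar A (Sg ar A X)"
    unfolding closed_set_def[of ar A "Sg ar A X"]
  proof (intro allI impI)
    fix f xs assume a: "length xs = ar f \<and> set xs \<subseteq> Sg ar A X"
    show "oper A f xs \<in> Sg ar A X" unfolding Sg_def
    proof (rule InterI)
      fix S assume S: "S \<in> {S. X \<subseteq> S \<and> S \<subseteq> carrier A \<and> closed_set ar A S}"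
      then have "set xs \<subseteq> S" using a unfolding Sg_def by blast
      then show "oper A f xs \<in> S" using a S by (auto simp: closed_set_def)
    qed
  qed
qed

lemma Sg_min: "X \<subseteq> T \<Longrightarrow> T \<subseteq> carrier A \<Longrightarrow> closed_set ar A T \<Longrightarrow> Sg ar A X \<subseteq> T"
  unfolding Sg_def by (rule Inter_lower) simp

lemma Sg_subalg:
  assumes A: "algebra ar A" and X: "X \<subseteq> carrier A"
  shows "Sg ar (A\<lparr>carrier := Sg ar A X\<rparr>) X = Sg ar A X"
proof (rule antisym)
  have p: "X \<subseteq> Sg ar A X" "Sg ar A X \<subseteq> carrier A" "closed_set ar A (Sg ar A X)" using Sg_props[OF A X] by auto
  show "Sg ar (A\<lparr>carrier := Sg ar A X\<rparr>) X \<subseteq> Sg ar A X"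
  proof (rule Sg_min)
    show "X \<subseteq> Sg ar A X" by (rule p(1))
    show "Sg ar A X \<subseteq> carrier (A\<lparr>carrier := Sg ar A X\<rparr>)" by simp
    show "closed_set ar (A\<lparr>carrier := Sg ar A X\<rparr>) (Sg ar A X)" using p(3) by (simp only: closed_set_upd)
  qed
  show "Sg ar A X \<subseteq> Sg ar (A\<lparr>carrier := Sg ar A X\<rparr>) X"
    unfolding Sg_def[of ar "A\<lparr>carrier := Sg ar A X\<rparr>" X]
  proof (rule Inter_greatest)
    fix T assume "T \<in> {S. X \<subseteq> S \<and> S \<subseteq> carrier (A\<lparr>carrier := Sg ar A X\<rparr>) \<and> closed_set ar (A\<lparr>carrier := Sg ar A X\<rparr>) S}"
    then have h: "X \<subseteq> T" "T \<subseteq> Sg ar A X" "closed_set ar A T" by (simp_all add: closed_set_upd)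
    have "T \<subseteq> carrier A" using h(2) p(2) by (rule subset_trans)
    then show "Sg ar A X \<subseteq> T" using h by (intro Sg_min)
  qed
qed

lemma Sg_eval:
  assumes A: "algebra ar A" and v: "range v \<subseteq> carrier A"
  shows "Sg ar A (range v) \<subseteq> {eval A v t | t. wf_trm ar t}"
proof (rule Sg_min)
  have clA: "closed_set ar A (carrier A)" using A by (simp add: algebra_def)
  show "range v \<subseteq> {eval A v t |t. wf_trm ar t}"
    by (auto intro!: exI[where x="Var _"])
  show "{eval A v t |t. wf_trm ar t} \<subseteq> carrier A" using eval_closed[OF clA v] by auto
  show "closed_set ar A {eval A v t |t. wf_trm ar t}"
    unfolding closed_set_def
  proof (intro allI impI)
    fix f xs assume a: "length xs = ar f \<and> set xs \<subseteq> {eval A v t |t. wf_trm ar t}"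
    define ts where "ts = map (\<lambda>x. SOME t. wf_trm ar t \<and> x = eval A v t) xs"
    have p: "wf_trm ar (SOME t. wf_trm ar t \<and> x = eval A v t) \<and> x = eval A v (SOME t. wf_trm ar t \<and> x = eval A v t)"
      if xin: "x \<in> set xs" for x
    proof -
      obtain t where "wf_trm ar t \<and> x = eval A v t" using a xin by blast
      then show ?thesis by (rule someI)
    qed
    have "map (eval A v) ts = xs" unfolding ts_def using p by (simp add: map_idI)
    moreover have "wf_trm ar (Op f ts)" using a p unfolding ts_def by auto
    ultimately have "oper A f xs = eval A v (Op f ts)" "wf_trm ar (Op f ts)" by auto
    then show "oper A f xs \<in> {eval A v t |t. wf_trm ar t}" by blast
  qed
qed

lemma equalizer:
  assumes A: "algebra ar A" and g: "hom ar A C g" and h: "hom ar A C h" and X: "X \<subseteq> carrier A"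
    and e: "\<forall>x\<in>X. g x = h x"
  shows "\<forall>y\<in>Sg ar A X. g y = h y"
proof -
  have clA: "closed_set ar A (carrier A)" using A by (simp add: algebra_def)
  have "Sg ar A X \<subseteq> {y\<in>carrier A. g y = h y}"
  proof (rule Sg_min)
    show "X \<subseteq> {y \<in> carrier A. g y = h y}" using X e by auto
    show "{y \<in> carrier A. g y = h y} \<subseteq> carrier A" by auto
    show "closed_set ar A {y \<in> carrier A. g y = h y}"
      unfolding closed_set_def
    proof (intro allI impI)
      fix f xs assume a: "length xs = ar f \<and> set xs \<subseteq> {y \<in> carrier A. g y = h y}"
      then have s: "set xs \<subseteq> carrier A" and m: "map g xs = map h xs" by (auto intro: map_cong)
      have "g (oper A f xs) = h (oper A f xs)" using g h a s m unfolding hom_def by metis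
      then show "oper A f xs \<in> {y \<in> carrier A. g y = h y}" using clA a s by (auto simp: closed_set_def)
    qed
  qed
  then show ?thesis by auto
qed

lemma pre_some:
  assumes "y \<in> k ` S"
  shows "(SOME x. x \<in> S \<and> k x = y) \<in> S \<and> k (SOME x. x \<in> S \<and> k x = y) = y"
proof -
  obtain x where "x \<in> S \<and> k x = y" using assms by blast
  then show ?thesis by (rule someI)
qed

lemma image_closed:
  assumes A: "algebra ar A" and h: "hom ar A D k"
  shows "closed_set ar D (k ` carrier A)"
  unfolding closed_set_def
proof (intro allI impI)
  have clA: "closed_set ar A (carrier A)" using A by (simp add: algebra_def)
  have hh: "\<forall>f xs. length xs = ar f \<and> set xs \<subseteq> carrier A \<longrightarrow> k (oper A f xs) = oper D f (map k xs)"
    using h unfolding hom_def by blast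
  fix f ys assume a: "length ys = ar f \<and> set ys \<subseteq> k ` carrier A"
  define pre where "pre y = (SOME x. x \<in> carrier A \<and> k x = y)" for y
  have pre: "pre y \<in> carrier A \<and> k (pre y) = y" if "y \<in> k ` carrier A" for y
    unfolding pre_def by (rule pre_some[OF that])
  let ?xs = "map pre ys"
  have sx: "set ?xs \<subseteq> carrier A" using a pre by auto
  have m: "map k ?xs = ys" using a pre by (simp add: map_idI subset_iff)
  have "k (oper A f ?xs) = oper D f (map k ?xs)" using hh a sx by simp
  then have e1: "oper D f ys = k (oper A f ?xs)" using m by simp
  have "oper A f ?xs \<in> carrier A" using clA a sx by (auto simp: closed_set_def)
  then show "oper D f ys \<in> k ` carrier A" using e1 by (rule image_eqI[rotated])
qed

lemma hom_comp:
  assumes "hom ar A B g" "hom ar B C h"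
  shows "hom ar A C (h \<circ> g)"
  unfolding hom_def
proof (intro conjI allI impI ballI)
  fix x assume "x \<in> carrier A" then show "(h \<circ> g) x \<in> carrier C" using assms by (auto simp: hom_def)
next
  fix f xs assume a: "length xs = ar f \<and> set xs \<subseteq> carrier A"
  then have "g (oper A f xs) = oper B f (map g xs)" using assms(1) by (auto simp: hom_def)
  moreover have "set (map g xs) \<subseteq> carrier B" "length (map g xs) = ar f" using a assms(1) by (auto simp: hom_def)
  moreover have "\<forall>f xs. length xs = ar f \<and> set xs \<subseteq> carrier B \<longrightarrow> h (oper B f xs) = oper C f (map h xs)"
    using assms(2) unfolding hom_def by blast
  ultimately show "(h \<circ> g) (oper A f xs) = oper C f (map (h \<circ> g) xs)"
    by simp
qed

definition tcong :: "('f trm \<Rightarrow> 'f trm \<Rightarrow> bool) \<Rightarrow> bool" where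
  "tcong R = ((\<forall>t. R t t) \<and> (\<forall>s t. R s t \<longrightarrow> R t s) \<and> (\<forall>s t u. R s t \<longrightarrow> R t u \<longrightarrow> R s u)
     \<and> (\<forall>f ss ts. list_all2 R ss ts \<longrightarrow> R (Op f ss) (Op f ts)))"

lemma tcong_refl: "tcong R \<Longrightarrow> R t t" unfolding tcong_def by blast
lemma tcong_sym: "tcong R \<Longrightarrow> R s t \<Longrightarrow> R t s" unfolding tcong_def by blast
lemma tcong_trans: "tcong R \<Longrightarrow> R s t \<Longrightarrow> R t u \<Longrightarrow> R s u" unfolding tcong_def by blast
lemma tcong_Op: "tcong R \<Longrightarrow> list_all2 R ss ts \<Longrightarrow> R (Op f ss) (Op f ts)" unfolding tcong_def by blast

locale ctx =
  fixes ar :: "'f \<Rightarrow> nat" and Qs :: "'f qid set" and e :: "'f trm \<Rightarrow> 'a"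
  assumes wfQ: "\<forall>q\<in>Qs. wf_qid ar q" and inj_e: "inj e"
begin

definition keq :: "'f trm \<Rightarrow> 'f trm \<Rightarrow> bool" where
  "keq s t = (\<forall>A :: ('f, 'a) alg. in_qv ar Qs A \<longrightarrow> sat_qid A ([], (s, t)))"

lemma keq_alt: "keq s t = (\<forall>A :: ('f, 'a) alg. \<forall>v :: nat \<Rightarrow> 'a. in_qv ar Qs A \<and> range v \<subseteq> carrier A \<longrightarrow> eval A v s = eval A v t)"
  unfolding keq_def sat_qid_def by auto

lemma keq_sym: "keq s t \<Longrightarrow> keq t s"
  unfolding keq_alt by simp

lemma keq_trans: assumes "keq s t" "keq t u" shows "keq s u"
  unfolding keq_alt
proof (intro allI impI)
  fix A :: "('f, 'a) alg" and v :: "nat \<Rightarrow> 'a" assume a: "in_qv ar Qs A \<and> range v \<subseteq> carrier A"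
  have "eval A v s = eval A v t" using assms(1) a unfolding keq_alt by blast
  also have "\<dots> = eval A v u" using assms(2) a unfolding keq_alt by blast
  finally show "eval A v s = eval A v u" .
qed

definition Rs :: "(nat \<Rightarrow> 'f trm) set \<Rightarrow> 'f trm \<Rightarrow> 'f trm \<Rightarrow> bool" where
  "Rs \<Sigma> s t = (\<forall>\<sigma>\<in>\<Sigma>. keq (subst \<sigma> s) (subst \<sigma> t))"

lemma tcong_Rs: "tcong (Rs \<Sigma>)"
  unfolding tcong_def
proof (intro conjI allI impI)
  show "\<And>t. Rs \<Sigma> t t" by (simp add: Rs_def keq_alt)
  show "\<And>s t. Rs \<Sigma> s t \<Longrightarrow> Rs \<Sigma> t s" unfolding Rs_def using keq_sym by blast
  show "\<And>s t u. Rs \<Sigma> s t \<Longrightarrow> Rs \<Sigma> t u \<Longrightarrow> Rs \<Sigma> s u" unfolding Rs_def using keq_trans by blast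
  fix f ss ts assume a: "list_all2 (Rs \<Sigma>) ss ts"
  show "Rs \<Sigma> (Op f ss) (Op f ts)"
    unfolding Rs_def keq_alt
  proof (intro ballI allI impI)
    fix \<sigma> and A :: "('f, 'a) alg" and v :: "nat \<Rightarrow> 'a" assume s: "\<sigma> \<in> \<Sigma>" and Av: "in_qv ar Qs A \<and> range v \<subseteq> carrier A"
    have "list_all2 (\<lambda>x y. eval A v (subst \<sigma> x) = eval A v (subst \<sigma> y)) ss ts"
      using a s Av by (auto simp: Rs_def keq_alt elim!: list_all2_mono)
    then have "map (eval A v \<circ> subst \<sigma>) ss = map (eval A v \<circ> subst \<sigma>) ts"
      by (auto simp: list_all2_conv_all_nth intro: nth_equalityI)
    then show "eval A v (subst \<sigma> (Op f ss)) = eval A v (subst \<sigma> (Op f ts))" by simp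
  qed
qed

definition nf :: "('f trm \<Rightarrow> 'f trm \<Rightarrow> bool) \<Rightarrow> 'f trm \<Rightarrow> 'f trm" where
  "nf R t = (SOME s. wf_trm ar s \<and> R t s)"

definition TA :: "('f trm \<Rightarrow> 'f trm \<Rightarrow> bool) \<Rightarrow> ('f, 'a) alg" where
  "TA R = \<lparr>carrier = (\<lambda>t. e (nf R t)) ` {t. wf_trm ar t},
           oper = (\<lambda>f xs. e (nf R (Op f (map (inv e) xs))))\<rparr>"

lemma nf_wf: "tcong R \<Longrightarrow> wf_trm ar t \<Longrightarrow> wf_trm ar (nf R t) \<and> R t (nf R t)"
proof -
  assume R: "tcong R" and t: "wf_trm ar t"
  have "\<exists>s. wf_trm ar s \<and> R t s" using t tcong_refl[OF R] by blast
  then show ?thesis unfolding nf_def by (rule someI_ex)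
qed

lemma nf_eq:
  assumes R: "tcong R" and s: "wf_trm ar s" and t: "wf_trm ar t"
  shows "e (nf R s) = e (nf R t) \<longleftrightarrow> R s t"
proof
  assume "e (nf R s) = e (nf R t)"
  then have "nf R s = nf R t" using inj_e by (simp add: inj_eq)
  moreover have "R s (nf R s)" "R t (nf R t)" using nf_wf[OF R s] nf_wf[OF R t] by auto
  ultimately have "R s (nf R t)" "R (nf R t) t" using tcong_sym[OF R] by auto
  then show "R s t" by (rule tcong_trans[OF R])
next
  assume st: "R s t"
  have "\<And>u. (wf_trm ar u \<and> R s u) = (wf_trm ar u \<and> R t u)"
  proof -
    fix u
    have ts: "R t s" using st by (rule tcong_sym[OF R])
    show "(wf_trm ar u \<and> R s u) = (wf_trm ar u \<and> R t u)"
      using tcong_trans[OF R ts, of u] tcong_trans[OF R st, of u] by blast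
  qed
  then show "e (nf R s) = e (nf R t)" unfolding nf_def by simp
qed

lemma nf_nf: "tcong R \<Longrightarrow> wf_trm ar t \<Longrightarrow> e (nf R (nf R t)) = e (nf R t)"
proof -
  assume R: "tcong R" and t: "wf_trm ar t"
  have "wf_trm ar (nf R t)" "R (nf R t) t" using nf_wf[OF R t] tcong_sym[OF R] by auto
  then show ?thesis using nf_eq[OF R _ t] by blast
qed

lemma TA_carrier:
  assumes R: "tcong R" and x: "x \<in> carrier (TA R)"
  shows "wf_trm ar (inv e x) \<and> x = e (nf R (inv e x))"
proof -
  obtain t where t: "wf_trm ar t" "x = e (nf R t)" using x by (auto simp: TA_def)
  then have "inv e x = nf R t" using inj_e by simp
  then show ?thesis using t nf_wf[OF R t(1)] nf_nf[OF R t(1)] by simp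
qed

lemma TA_eval:
  assumes R: "tcong R" and tau: "\<And>n. wf_trm ar (\<tau> n)"
  shows "wf_trm ar t \<Longrightarrow> eval (TA R) (\<lambda>n. e (nf R (\<tau> n))) t = e (nf R (subst \<tau> t))"
proof (induction t)
  case (Var n) then show ?case by simp
next
  case (Op f ts)
  have IH: "\<And>t. t \<in> set ts \<Longrightarrow> eval (TA R) (\<lambda>n. e (nf R (\<tau> n))) t = e (nf R (subst \<tau> t))"
    using Op by auto
  have "eval (TA R) (\<lambda>n. e (nf R (\<tau> n))) (Op f ts) = e (nf R (Op f (map (\<lambda>t. nf R (subst \<tau> t)) ts)))"
    using IH inj_e by (simp add: TA_def comp_def cong: map_cong)
  also have "\<dots> = e (nf R (subst \<tau> (Op f ts)))"
  proof (subst nf_eq[OF R])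
    have w: "\<And>t. t \<in> set ts \<Longrightarrow> wf_trm ar (subst \<tau> t)" using Op.prems by (auto intro!: wf_subst tau)
    show "wf_trm ar (Op f (map (\<lambda>t. nf R (subst \<tau> t)) ts))" using w nf_wf[OF R] Op.prems by auto
    show "wf_trm ar (subst \<tau> (Op f ts))" using w Op.prems by auto
    have "list_all2 R (map (\<lambda>t. nf R (subst \<tau> t)) ts) (map (subst \<tau>) ts)"
      using w nf_wf[OF R] tcong_sym[OF R] by (auto simp: list.rel_map list_all2_same)
    then show "R (Op f (map (\<lambda>t. nf R (subst \<tau> t)) ts)) (subst \<tau> (Op f ts))"
      using tcong_Op[OF R] by simp
  qed
  finally show ?case .
qed

lemma TA_val_wf:
  assumes R: "tcong R" and v: "range v \<subseteq> carrier (TA R)"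
  shows "wf_trm ar (inv e (v n))" "v = (\<lambda>n. e (nf R (inv e (v n))))"
proof -
  have "v n \<in> carrier (TA R)" for n using v by auto
  then have h: "wf_trm ar (inv e (v n)) \<and> v n = e (nf R (inv e (v n)))" for n using TA_carrier[OF R] by blast
  show "wf_trm ar (inv e (v n))" using h by blast
  show "v = (\<lambda>n. e (nf R (inv e (v n))))" using h by (intro ext) blast
qed

lemma TA_eval_gen:
  assumes R: "tcong R" and v: "range v \<subseteq> carrier (TA R)" and t: "wf_trm ar t"
  shows "eval (TA R) v t = e (nf R (subst (\<lambda>n. inv e (v n)) t))"
proof -
  have "eval (TA R) (\<lambda>n. e (nf R (inv e (v n)))) t = e (nf R (subst (\<lambda>n. inv e (v n)) t))"
    by (rule TA_eval[OF R TA_val_wf(1)[OF R v] t])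
  then show ?thesis using TA_val_wf(2)[OF R v] by simp
qed

lemma TA_alg: "tcong R \<Longrightarrow> algebra ar (TA R)"
  unfolding algebra_def closed_set_def
proof (intro conjI allI impI)
  show "carrier (TA R) \<noteq> {}" by (auto simp: TA_def intro!: exI[where x="Var 0"])
  fix f xs assume R: "tcong R" and a: "length xs = ar f \<and> set xs \<subseteq> carrier (TA R)"
  have "wf_trm ar (Op f (map (inv e) xs))" using a TA_carrier[OF R] by auto
  then show "oper (TA R) f xs \<in> carrier (TA R)" by (auto simp: TA_def)
qed

lemma TA_in_qv:
  assumes S: "\<forall>\<sigma>\<in>\<Sigma>. \<forall>n. wf_trm ar (\<sigma> n)"
  shows "in_qv ar Qs (TA (Rs \<Sigma>))"
  unfolding in_qv_def
proof (intro conjI ballI)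
  let ?R = "Rs \<Sigma>"
  have R: "tcong ?R" by (rule tcong_Rs)
  show "algebra ar (TA ?R)" using TA_alg[OF R] .
  fix q assume q: "q \<in> Qs"
  have wq: "wf_qid ar q" using wfQ q by auto
  show "sat_qid (TA ?R) q"
    unfolding sat_qid_def
  proof (intro allI impI)
    fix v assume v: "range v \<subseteq> carrier (TA ?R)"
      and pr: "\<forall>e\<in>set (fst q). eval (TA ?R) v (fst e) = eval (TA ?R) v (snd e)"
    define \<tau> where "\<tau> n = inv e (v n)" for n
    have tw: "\<And>n. wf_trm ar (\<tau> n)" unfolding \<tau>_def by (rule TA_val_wf(1)[OF R v])
    have ev: "eval (TA ?R) v t = e (nf ?R (subst \<tau> t))" if "wf_trm ar t" for t
      unfolding \<tau>_def by (rule TA_eval_gen[OF R v that])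
    have prR: "?R (subst \<tau> (fst ee)) (subst \<tau> (snd ee))" if ee: "ee \<in> set (fst q)" for ee
    proof -
      have w1: "wf_trm ar (fst ee)" "wf_trm ar (snd ee)" using wq ee by (auto simp: wf_qid_def)
      have "eval (TA ?R) v (fst ee) = eval (TA ?R) v (snd ee)" using pr ee by blast
      then have "e (nf ?R (subst \<tau> (fst ee))) = e (nf ?R (subst \<tau> (snd ee)))" using ev w1 by simp
      then show ?thesis using nf_eq[OF R wf_subst[of ar _ \<tau>, OF w1(1) tw] wf_subst[of ar _ \<tau>, OF w1(2) tw]] by blast
    qed
    have "?R (subst \<tau> (fst (snd q))) (subst \<tau> (snd (snd q)))"
      unfolding Rs_def keq_alt
    proof (intro ballI allI impI)
      fix \<sigma> and A :: "('f, 'a) alg" and w :: "nat \<Rightarrow> 'a" assume s: "\<sigma> \<in> \<Sigma>" and Aw: "in_qv ar Qs A \<and> range w \<subseteq> carrier A"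
      define w' where "w' n = eval A w (subst \<sigma> (\<tau> n))" for n
      have clA: "closed_set ar A (carrier A)" using Aw by (auto simp: in_qv_def algebra_def)
      have w': "range w' \<subseteq> carrier A" unfolding w'_def
        using eval_closed[OF clA] Aw wf_subst[OF tw] S s by auto
      have key: "eval A w (subst \<sigma> (subst \<tau> t)) = eval A w' t" for t
        unfolding subst_subst w'_def by (rule eval_subst)
      have "\<forall>ee\<in>set (fst q). eval A w' (fst ee) = eval A w' (snd ee)"
        using prR s Aw by (auto simp: Rs_def keq_alt key[symmetric])
      then have "eval A w' (fst (snd q)) = eval A w' (snd (snd q))"
        using Aw q w' by (auto simp: in_qv_def sat_qid_def)
      then show "eval A w (subst \<sigma> (subst \<tau> (fst (snd q)))) = eval A w (subst \<sigma> (subst \<tau> (snd (snd q))))"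
        by (simp add: key)
    qed
    moreover have "wf_trm ar (fst (snd q))" "wf_trm ar (snd (snd q))" using wq by (auto simp: wf_qid_def)
    ultimately show "eval (TA ?R) v (fst (snd q)) = eval (TA ?R) v (snd (snd q))"
      using ev nf_eq[OF R wf_subst[of ar _ \<tau>, OF _ tw] wf_subst[of ar _ \<tau>, OF _ tw]] by simp
  qed
qed

definition nat_map :: "('f trm \<Rightarrow> 'f trm \<Rightarrow> bool) \<Rightarrow> 'a \<Rightarrow> 'a" where
  "nat_map R' u = e (nf R' (inv e u))"

lemma nat_map_val:
  assumes R: "tcong R" and R': "tcong R'" and le: "\<forall>s t. R s t \<longrightarrow> R' s t" and s: "wf_trm ar s"
  shows "nat_map R' (e (nf R s)) = e (nf R' s)"
proof -
  have "inv e (e (nf R s)) = nf R s" using inj_e by simp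
  moreover have "R' (nf R s) s" using nf_wf[OF R s] le tcong_sym[OF R'] by blast
  moreover have "wf_trm ar (nf R s)" using nf_wf[OF R s] by blast
  ultimately show ?thesis unfolding nat_map_def using nf_eq[OF R' _ s] by simp
qed

lemma nat_map_hom:
  assumes R: "tcong R" and R': "tcong R'" and le: "\<forall>s t. R s t \<longrightarrow> R' s t"
  shows "hom ar (TA R) (TA R') (nat_map R')"
  unfolding hom_def
proof (intro conjI allI impI ballI)
  fix x assume "x \<in> carrier (TA R)"
  then obtain t where "wf_trm ar t" "x = e (nf R t)" by (auto simp: TA_def)
  then show "nat_map R' x \<in> carrier (TA R')" using nat_map_val[OF R R' le] by (auto simp: TA_def)
next
  fix f xs assume a: "length xs = ar f \<and> set xs \<subseteq> carrier (TA R)"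
  let ?ts = "map (inv e) xs"
  have w: "\<forall>t\<in>set ?ts. wf_trm ar t" using a TA_carrier[OF R] by auto
  have xs: "xs = map (\<lambda>t. e (nf R t)) ?ts" using a TA_carrier[OF R]
    by (simp add: map_idI subset_iff)
  have lhs: "nat_map R' (oper (TA R) f xs) = e (nf R' (Op f ?ts))"
    using nat_map_val[OF R R' le] w a by (simp add: TA_def)
  have "map (nat_map R') xs = map (\<lambda>t. e (nf R' t)) ?ts"
    using w nat_map_val[OF R R' le] by (subst xs) (simp cong: map_cong)
  then have rhs: "oper (TA R') f (map (nat_map R') xs) = e (nf R' (Op f (map (nf R') ?ts)))"
    using inj_e by (simp add: TA_def comp_def nat_map_def)
  have "R' (Op f ?ts) (Op f (map (nf R') ?ts))"
    using w nf_wf[OF R'] by (auto simp: list.rel_map list_all2_same intro!: tcong_Op[OF R'])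
  moreover have "wf_trm ar (Op f ?ts)" "wf_trm ar (Op f (map (nf R') ?ts))"
    using w a nf_wf[OF R'] by auto
  ultimately show "nat_map R' (oper (TA R) f xs) = oper (TA R') f (map (nat_map R') xs)"
    using lhs rhs nf_eq[OF R'] by simp
qed

end

lemma max_RFSI:
  fixes C :: "('f, 'a) alg"
  assumes Q: "\<forall>q\<in>Qs. wf_qid ar q" and C: "in_qv ar Qs C"
    and c: "c1 \<in> carrier C" "c2 \<in> carrier C" "c1 \<noteq> c2"
  shows "\<exists>\<phi>. kcong ar Qs C \<phi> \<and> (c1, c2) \<notin> \<phi> \<and> RFSI ar Qs (qrep C \<phi>)"
proof -
  define M where "M = {\<phi>. kcong ar Qs C \<phi> \<and> (c1, c2) \<notin> \<phi>}"
  have algC: "algebra ar C" using C by (simp add: in_qv_def)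
  have "\<forall>Ch\<in>chains M. \<exists>U\<in>M. \<forall>X\<in>Ch. X \<subseteq> U"
  proof
    fix Ch assume ch: "Ch \<in> chains M"
    then have sub: "Ch \<subseteq> M" and chn: "chain\<^sub>\<subseteq> Ch" by (auto simp: chains_def)
    show "\<exists>U\<in>M. \<forall>X\<in>Ch. X \<subseteq> U"
    proof (cases "Ch = {}")
      case True
      have "Id_on (carrier C) \<in> M" using kcong_Id[OF C Q] c(3) by (auto simp: M_def)
      then show ?thesis using True by blast
    next
      case False
      have "\<forall>\<theta>\<in>Ch. kcong ar Qs C \<theta>" using sub by (auto simp: M_def)
      then have "kcong ar Qs C (\<Union>Ch)" using kcong_chain[OF False chn] by blast
      moreover have "(c1, c2) \<notin> \<Union>Ch" using sub by (auto simp: M_def)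
      ultimately have "\<Union>Ch \<in> M" by (simp add: M_def)
      then show ?thesis by blast
    qed
  qed
  then have "\<exists>M0\<in>M. \<forall>X\<in>M. M0 \<subseteq> X \<longrightarrow> X = M0" by (rule Zorn_Lemma2)
  then obtain \<phi> where phiM: "\<phi> \<in> M" and mx: "\<forall>X\<in>M. \<phi> \<subseteq> X \<longrightarrow> X = \<phi>"
    by blast
  have kphi: "kcong ar Qs C \<phi>" and nphi: "(c1, c2) \<notin> \<phi>" using phiM by (auto simp: M_def)
  have cphi: "congruence ar C \<phi>" using kphi by (rule kcong_cong)
  have eqphi: "equiv (carrier C) \<phi>" using kphi by (rule kcong_equiv)
  let ?D = "qrep C \<phi>"
  let ?r = "rep \<phi>"
  have hr: "hom ar C ?D ?r" by (rule qrep_hom(1)[OF cphi algC])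
  have cD: "carrier ?D = ?r ` carrier C" by (simp add: qrep_def)
  have inD: "in_qv ar Qs ?D" by (rule qrep_in_qv[OF Q algC kphi])
  have rne: "?r c1 \<noteq> ?r c2" using rep_eq[OF eqphi c(1,2)] nphi by simp
  have ntD: "nontrivial ?D" unfolding nontrivial_def cD using c rne by blast
  have main: "\<exists>i<n. inj_on (h i) (carrier ?D)"
    if hyp1: "\<forall>i<n. in_qv ar Qs (B i) \<and> hom ar ?D (B i) (h i) \<and> h i ` carrier ?D = carrier (B i)"
      and hyp2: "\<forall>a\<in>carrier ?D. \<forall>b\<in>carrier ?D. (\<forall>i<n. h i a = h i b) \<longrightarrow> a = b"
    for n and B :: "nat \<Rightarrow> ('f, 'a) alg" and h :: "nat \<Rightarrow> 'a \<Rightarrow> 'a"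
  proof (rule ccontr)
    assume ni: "\<not> (\<exists>i<n. inj_on (h i) (carrier ?D))"
    have "h i (?r c1) = h i (?r c2)" if i: "i < n" for i
    proof (rule ccontr)
      assume neq: "h i (?r c1) \<noteq> h i (?r c2)"
      let ?k = "kerrel C (h i \<circ> ?r)"
      have h1: "in_qv ar Qs (B i)" "hom ar ?D (B i) (h i)" using hyp1 i by auto
      have hk: "hom ar C (B i) (h i \<circ> ?r)" by (rule hom_comp[OF hr h1(2)])
      have kk: "kcong ar Qs C ?k" by (rule ker_kcong[OF Q algC hk h1(1)])
      have sub: "\<phi> \<subseteq> ?k"
      proof
        fix p assume p: "p \<in> \<phi>"
        obtain x y where xy: "p = (x, y)" by (cases p)
        have xyc: "x \<in> carrier C" "y \<in> carrier C" using kcong_sub[OF kphi] p xy by auto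
        have "?r x = ?r y" using rep_eq[OF eqphi xyc] p xy by simp
        then show "p \<in> ?k" using xy xyc by (simp add: kerrel_def)
      qed
      have "(c1, c2) \<notin> ?k" using neq by (simp add: kerrel_def)
      then have "?k \<in> M" using kk by (simp add: M_def)
      then have keq: "?k = \<phi>" using mx sub by blast
      have "\<not> inj_on (h i) (carrier ?D)" using ni i by blast
      then obtain u v where uv: "u \<in> carrier ?D" "v \<in> carrier ?D" "u \<noteq> v" "h i u = h i v"
        unfolding inj_on_def by blast
      then obtain x y where xy: "x \<in> carrier C" "y \<in> carrier C" "u = ?r x" "v = ?r y" using cD by auto
      have "(x, y) \<in> ?k" using xy uv by (simp add: kerrel_def)
      moreover have "(x, y) \<notin> \<phi>" using rep_eq[OF eqphi xy(1,2)] xy uv by simp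
      ultimately show False using keq by simp
    qed
    moreover have "?r c1 \<in> carrier ?D" "?r c2 \<in> carrier ?D" using cD c by auto
    ultimately have "?r c1 = ?r c2" using hyp2 by blast
    then show False using rne by simp
  qed
  have "RFSI ar Qs ?D" unfolding RFSI_def
  proof (intro conjI allI impI)
    show "in_qv ar Qs ?D" by (rule inD)
    show "nontrivial ?D" by (rule ntD)
    fix n and B :: "nat \<Rightarrow> ('f, 'a) alg" and h :: "nat \<Rightarrow> 'a \<Rightarrow> 'a"
    assume "(\<forall>i<n. in_qv ar Qs (B i) \<and> hom ar ?D (B i) (h i) \<and> h i ` carrier ?D = carrier (B i)) \<and>
        (\<forall>a\<in>carrier ?D. \<forall>b\<in>carrier ?D. (\<forall>i<n. h i a = h i b) \<longrightarrow> a = b)"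
    then show "\<exists>i<n. inj_on (h i) (carrier ?D)" by (elim conjE) (rule main)
  qed
  then show ?thesis using kphi nphi by blast
qed

lemma lat_join_least: "c \<in> L \<Longrightarrow> a \<union> b \<subseteq> c \<Longrightarrow> lat_join L a b \<subseteq> c"
  unfolding lat_join_def by blast

lemma lat_join_upper: "a \<union> b \<subseteq> lat_join L a b"
  unfolding lat_join_def by blast

lemma kcong_join:
  assumes A: "algebra ar A" and Q: "\<forall>q\<in>Qs. wf_qid ar q"
    and a: "kcong ar Qs A a" and b: "kcong ar Qs A b"
  shows "kcong ar Qs A (lat_join {\<theta>. kcong ar Qs A \<theta>} a b)"
proof -
  let ?F = "{z \<in> {\<theta>. kcong ar Qs A \<theta>}. a \<union> b \<subseteq> z}"
  have "carrier A \<times> carrier A \<in> ?F" using kcong_top[OF A Q] kcong_sub[OF a] kcong_sub[OF b] by auto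
  then have ne: "?F \<noteq> {}" by blast
  have al: "\<forall>\<theta>\<in>?F. kcong ar Qs A \<theta>" by blast
  have "kcong ar Qs A (\<Inter>?F)" using kcong_Inter[OF ne al] .
  then show ?thesis by (simp only: lat_join_def)
qed

lemma prime2:
  fixes S G :: "('f, 'a) alg"
  assumes Q: "\<forall>q\<in>Qs. wf_qid ar q" and CD: "rel_CD ar Qs TYPE('a)"
    and S: "in_qv ar Qs S" and G: "RFSI ar Qs G" and hk: "hom ar S G k" and sk: "k ` carrier S = carrier G"
    and t1: "kcong ar Qs S \<theta>1" and t2: "kcong ar Qs S \<theta>2" and sub: "\<theta>1 \<inter> \<theta>2 \<subseteq> kerrel S k"
  shows "\<theta>1 \<subseteq> kerrel S k \<or> \<theta>2 \<subseteq> kerrel S k"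
proof -
  let ?L = "{\<theta>. kcong ar Qs S \<theta>}"
  let ?\<kappa> = "kerrel S k"
  have algS: "algebra ar S" using S by (simp add: in_qv_def)
  have Lc: "ConK ar Qs S = ?L" by (rule set_eqI) (simp add: ConK_eq[OF Q algS])
  have "distrib_family (ConK ar Qs S)" using CD S unfolding rel_CD_def by blast
  then have dist: "distrib_family ?L" by (simp only: Lc)
  have dist': "x \<inter> lat_join ?L y z = lat_join ?L (x \<inter> y) (x \<inter> z)"
    if "kcong ar Qs S x" "kcong ar Qs S y" "kcong ar Qs S z" for x y z
    using dist that unfolding distrib_family_def by simp
  have inG: "in_qv ar Qs G" using G by (simp add: RFSI_def)
  have kk: "kcong ar Qs S ?\<kappa>" by (rule ker_kcong[OF Q algS hk inG])
  define J1 where "J1 = lat_join ?L ?\<kappa> \<theta>1"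
  define J2 where "J2 = lat_join ?L ?\<kappa> \<theta>2"
  have J1L: "kcong ar Qs S J1" unfolding J1_def by (rule kcong_join[OF algS Q kk t1])
  have J2L: "kcong ar Qs S J2" unfolding J2_def by (rule kcong_join[OF algS Q kk t2])
  have "?\<kappa> \<union> \<theta>1 \<subseteq> J1" unfolding J1_def by (rule lat_join_upper)
  then have kJ1: "?\<kappa> \<subseteq> J1" "\<theta>1 \<subseteq> J1" by auto
  have "?\<kappa> \<union> \<theta>2 \<subseteq> J2" unfolding J2_def by (rule lat_join_upper)
  then have kJ2: "?\<kappa> \<subseteq> J2" "\<theta>2 \<subseteq> J2" by auto
  have D1: "\<theta>2 \<inter> J1 = lat_join ?L (\<theta>2 \<inter> ?\<kappa>) (\<theta>2 \<inter> \<theta>1)"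
    unfolding J1_def by (rule dist'[OF t2 kk t1])
  have "\<theta>2 \<inter> J1 \<subseteq> ?\<kappa>" unfolding D1 using kk sub by (intro lat_join_least) auto
  have D2: "J1 \<inter> J2 = lat_join ?L (J1 \<inter> ?\<kappa>) (J1 \<inter> \<theta>2)"
    unfolding J2_def by (rule dist'[OF J1L kk t2])
  have J12: "J1 \<inter> J2 \<subseteq> ?\<kappa>" unfolding D2 using kk \<open>\<theta>2 \<inter> J1 \<subseteq> ?\<kappa>\<close> by (intro lat_join_least) auto
  define Jsel where "Jsel i = (if i = (0::nat) then J1 else J2)" for i
  define pre where "pre y = (SOME s. s \<in> carrier S \<and> k s = y)" for y
  define Bf where "Bf i = qrep S (Jsel i)" for i
  define hf where "hf i y = rep (Jsel i) (pre y)" for i y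
  have JselL: "kcong ar Qs S (Jsel i)" for i using J1L J2L by (simp add: Jsel_def)
  have kJsel: "?\<kappa> \<subseteq> Jsel i" for i using kJ1 kJ2 by (simp add: Jsel_def)
  have pre: "pre y \<in> carrier S \<and> k (pre y) = y" if "y \<in> k ` carrier S" for y
    unfolding pre_def by (rule pre_some[OF that])
  have eqJ: "equiv (carrier S) (Jsel i)" for i using JselL by (rule kcong_equiv)
  have hfk: "hf i (k s) = rep (Jsel i) s" if s: "s \<in> carrier S" for i s
  proof -
    have p: "pre (k s) \<in> carrier S" "k (pre (k s)) = k s" using pre s by auto
    then have "(pre (k s), s) \<in> ?\<kappa>" using s by (simp add: kerrel_def)
    then have "(pre (k s), s) \<in> Jsel i" using kJsel by blast
    then show ?thesis unfolding hf_def using rep_eq[OF eqJ p(1) s] by simp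
  qed
  have hqr: "hom ar S (Bf i) (rep (Jsel i))" "rep (Jsel i) ` carrier S = carrier (Bf i)" for i
    unfolding Bf_def using qrep_hom[OF kcong_cong[OF JselL] algS] by auto
  have conds: "in_qv ar Qs (Bf i) \<and> hom ar G (Bf i) (hf i) \<and> hf i ` carrier G = carrier (Bf i)" for i
  proof (intro conjI)
    show "in_qv ar Qs (Bf i)" unfolding Bf_def by (rule qrep_in_qv[OF Q algS JselL])
    have "hf i ` carrier G = (\<lambda>s. hf i (k s)) ` carrier S" using sk by (simp add: image_image[symmetric])
    also have "\<dots> = rep (Jsel i) ` carrier S" by (rule image_cong) (simp_all add: hfk)
    also have "\<dots> = carrier (Bf i)" by (rule hqr(2))
    finally show "hf i ` carrier G = carrier (Bf i)" .
    show "hom ar G (Bf i) (hf i)"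
      unfolding hom_def
    proof (intro conjI allI impI ballI)
      fix y assume "y \<in> carrier G"
      then obtain s where s: "s \<in> carrier S" "y = k s" using sk by auto
      have "rep (Jsel i) s \<in> rep (Jsel i) ` carrier S" using s(1) by (rule imageI)
      then show "hf i y \<in> carrier (Bf i)" using hfk[OF s(1)] hqr(2)[of i] s(2) by simp
    next
      fix f ys assume a: "length ys = ar f \<and> set ys \<subseteq> carrier G"
      let ?xs = "map pre ys"
      have ysk: "\<forall>y\<in>set ys. y \<in> k ` carrier S" unfolding sk using a by blast
      have sx: "set ?xs \<subseteq> carrier S" using ysk pre by auto
      have m: "map k ?xs = ys" using ysk pre by (simp add: map_idI)
      have hh: "\<forall>f xs. length xs = ar f \<and> set xs \<subseteq> carrier S \<longrightarrow> k (oper S f xs) = oper G f (map k xs)"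
        using hk unfolding hom_def by blast
      have lx: "length ?xs = ar f" using a by simp
      have "k (oper S f ?xs) = oper G f (map k ?xs)" using hh lx sx by blast
      then have o1: "oper G f ys = k (oper S f ?xs)" using m by simp
      have oin: "oper S f ?xs \<in> carrier S" using algS a sx by (auto simp: algebra_def closed_set_def)
      have hq: "\<forall>f xs. length xs = ar f \<and> set xs \<subseteq> carrier S \<longrightarrow> rep (Jsel i) (oper S f xs) = oper (Bf i) f (map (rep (Jsel i)) xs)"
        using hqr(1) unfolding hom_def by blast
      have "hf i (oper G f ys) = rep (Jsel i) (oper S f ?xs)" using o1 hfk oin by simp
      also have "\<dots> = oper (Bf i) f (map (rep (Jsel i)) ?xs)" using hq a sx by simp
      also have "map (rep (Jsel i)) ?xs = map (hf i) ys" by (simp add: hf_def)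
      finally show "hf i (oper G f ys) = oper (Bf i) f (map (hf i) ys)" .
    qed
  qed
  have jinj: "\<forall>a\<in>carrier G. \<forall>b\<in>carrier G. (\<forall>i<2. hf i a = hf i b) \<longrightarrow> a = b"
  proof (intro ballI impI)
    fix a b assume a: "a \<in> carrier G" and b: "b \<in> carrier G" and e: "\<forall>i<2. hf i a = hf i b"
    obtain s where s: "s \<in> carrier S" "a = k s" using a sk by auto
    obtain t where t: "t \<in> carrier S" "b = k t" using b sk by auto
    have "rep (Jsel i) s = rep (Jsel i) t" if "i < 2" for i
      using e that hfk[OF s(1), of i] hfk[OF t(1), of i] s(2) t(2) by simp
    then have "(s, t) \<in> Jsel 0" "(s, t) \<in> Jsel 1" using rep_eq[OF eqJ s(1) t(1)] by auto
    then have "(s, t) \<in> J1 \<inter> J2" by (simp add: Jsel_def)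
    then have "(s, t) \<in> ?\<kappa>" using J12 by blast
    then show "a = b" using s t by (simp add: kerrel_def)
  qed
  have "\<exists>i<2. inj_on (hf i) (carrier G)"
    using G[unfolded RFSI_def, THEN conjunct2, THEN conjunct2, rule_format, of 2 Bf hf] conds jinj by blast
  then obtain i where i: "i < 2" "inj_on (hf i) (carrier G)" by blast
  have "Jsel i \<subseteq> ?\<kappa>"
  proof
    fix p assume p: "p \<in> Jsel i"
    obtain s t where st: "p = (s, t)" by (cases p)
    have stc: "s \<in> carrier S" "t \<in> carrier S" using kcong_sub[OF JselL] p st by auto
    have "rep (Jsel i) s = rep (Jsel i) t" using rep_eq[OF eqJ stc] p st by simp
    then have "hf i (k s) = hf i (k t)" using hfk stc by simp
    moreover have "k s \<in> carrier G" "k t \<in> carrier G" using sk stc by auto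
    ultimately have "k s = k t" using i(2) unfolding inj_on_def by blast
    then show "p \<in> ?\<kappa>" using st stc by (simp add: kerrel_def)
  qed
  then show ?thesis using i kJ1(2) kJ2(2) unfolding Jsel_def by (cases "i = 0") auto
qed

lemma combin:
  assumes "(a = x0 \<and> (x1 = x2 \<or> x0 = x2)) \<or> (a = x2 \<and> x0 = x1)"
    and "(b = x0 \<and> (x1 = x2 \<or> x0 = x2)) \<or> (b = x2 \<and> x0 = x1)"
  shows "a = b"
  using assms by auto

context ctx
begin

definition sg1 :: "nat \<Rightarrow> 'f trm" where "sg1 n = (if n = 1 \<or> n = 2 then Var 1 else Var 0)"
definition sg2 :: "nat \<Rightarrow> 'f trm" where "sg2 n = (if n = 1 then Var 1 else Var 0)"
definition sg3 :: "nat \<Rightarrow> 'f trm" where "sg3 n = (if n = 0 \<or> n = 1 then Var 1 else Var 0)"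

definition Sig :: "(nat \<Rightarrow> 'f trm) set" where "Sig = {sg1, sg2, sg3}"

definition SS :: "('f, 'a) alg" where "SS = TA (Rs Sig)"

definition gen :: "nat \<Rightarrow> 'a" where "gen n = e (nf (Rs Sig) (Var n))"

definition eta :: "(nat \<Rightarrow> 'f trm) \<Rightarrow> ('a \<times> 'a) set" where
  "eta \<sigma> = kerrel SS (nat_map (Rs {\<sigma>}))"

lemma sig_wf: "\<forall>\<sigma>\<in>Sig. \<forall>n. wf_trm ar (\<sigma> n)"
  by (simp add: Sig_def sg1_def sg2_def sg3_def)

lemma sig_wf1: "\<forall>\<sigma>\<in>{\<sigma>'}. \<forall>n. wf_trm ar (\<sigma>' n)" if "\<sigma>' \<in> Sig"
  using sig_wf that by blast

lemma SS_in_qv: "in_qv ar Qs SS"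
  unfolding SS_def by (rule TA_in_qv[OF sig_wf])

lemma alg_SS: "algebra ar SS"
  unfolding SS_def by (rule TA_alg[OF tcong_Rs])

lemma gen_in: "gen n \<in> carrier SS"
  unfolding gen_def SS_def TA_def by auto

lemma keq_refl: "keq t t"
  unfolding keq_alt by simp

lemma Rs_mono: "\<sigma> \<in> Sig \<Longrightarrow> \<forall>s t. Rs Sig s t \<longrightarrow> Rs {\<sigma>} s t"
  unfolding Rs_def by blast

lemma eta_kcong:
  assumes s: "\<sigma> \<in> Sig"
  shows "kcong ar Qs SS (eta \<sigma>)"
proof -
  have iq: "in_qv ar Qs (TA (Rs {\<sigma>}))" using sig_wf s by (intro TA_in_qv) blast
  have h: "hom ar SS (TA (Rs {\<sigma>})) (nat_map (Rs {\<sigma>}))"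
    unfolding SS_def by (rule nat_map_hom[OF tcong_Rs tcong_Rs Rs_mono[OF s]])
  show ?thesis unfolding eta_def by (rule ker_kcong[OF wfQ alg_SS h iq])
qed

lemma eta_gen:
  assumes s: "\<sigma> \<in> Sig" and eq: "\<sigma> a = \<sigma> b"
  shows "(gen a, gen b) \<in> eta \<sigma>"
proof -
  have "nat_map (Rs {\<sigma>}) (gen a) = e (nf (Rs {\<sigma>}) (Var a))"
    unfolding gen_def by (rule nat_map_val[OF tcong_Rs tcong_Rs Rs_mono[OF s]]) simp
  moreover have "nat_map (Rs {\<sigma>}) (gen b) = e (nf (Rs {\<sigma>}) (Var b))"
    unfolding gen_def by (rule nat_map_val[OF tcong_Rs tcong_Rs Rs_mono[OF s]]) simp
  moreover have "Rs {\<sigma>} (Var a) (Var b)" unfolding Rs_def using eq keq_refl by simp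
  then have "e (nf (Rs {\<sigma>}) (Var a)) = e (nf (Rs {\<sigma>}) (Var b))"
    using nf_eq[OF tcong_Rs, of "Var a" "Var b"] by simp
  ultimately show ?thesis unfolding eta_def kerrel_def using gen_in by simp
qed

lemma eta_int:
  "eta sg1 \<inter> eta sg2 \<inter> eta sg3 \<subseteq> kerrel SS k"
proof
  fix p assume p: "p \<in> eta sg1 \<inter> eta sg2 \<inter> eta sg3"
  obtain u v where uv: "p = (u, v)" by (cases p)
  have c: "u \<in> carrier SS" "v \<in> carrier SS" using p uv by (auto simp: eta_def kerrel_def)
  obtain s0 where su: "wf_trm ar s0" "u = e (nf (Rs Sig) s0)" using c(1) unfolding SS_def TA_def by auto
  obtain t0 where tv: "wf_trm ar t0" "v = e (nf (Rs Sig) t0)" using c(2) unfolding SS_def TA_def by auto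
  have one: "Rs {\<sigma>} s0 t0" if s: "\<sigma> \<in> Sig" and pe: "(u, v) \<in> eta \<sigma>" for \<sigma>
  proof -
    have n1: "nat_map (Rs {\<sigma>}) u = e (nf (Rs {\<sigma>}) s0)"
      unfolding su(2) by (rule nat_map_val[OF tcong_Rs tcong_Rs Rs_mono[OF s] su(1)])
    have n2: "nat_map (Rs {\<sigma>}) v = e (nf (Rs {\<sigma>}) t0)"
      unfolding tv(2) by (rule nat_map_val[OF tcong_Rs tcong_Rs Rs_mono[OF s] tv(1)])
    have "nat_map (Rs {\<sigma>}) u = nat_map (Rs {\<sigma>}) v" using pe by (simp add: eta_def kerrel_def)
    then have "e (nf (Rs {\<sigma>}) s0) = e (nf (Rs {\<sigma>}) t0)" using n1 n2 by simp
    then show ?thesis using nf_eq[OF tcong_Rs su(1) tv(1), of "{\<sigma>}"] by simp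
  qed
  have "Rs {sg1} s0 t0" "Rs {sg2} s0 t0" "Rs {sg3} s0 t0"
    using one p uv by (auto simp: Sig_def)
  then have "Rs Sig s0 t0" unfolding Rs_def Sig_def by auto
  then have "e (nf (Rs Sig) s0) = e (nf (Rs Sig) t0)" using nf_eq[OF tcong_Rs su(1) tv(1), of Sig] by simp
  then have "u = v" using su(2) tv(2) by simp
  then show "p \<in> kerrel SS k" using uv c by (simp add: kerrel_def)
qed

lemma kcong_Int2: "kcong ar Qs A a \<Longrightarrow> kcong ar Qs A b \<Longrightarrow> kcong ar Qs A (a \<inter> b)"
  using kcong_Inter[of "{a, b}" ar Qs A] by simp

lemma Pk:
  fixes D :: "('f, 'a) alg"
  assumes sub: "RFSI_sub_closed ar Qs TYPE('a)" and CD: "rel_CD ar Qs TYPE('a)"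
    and D: "RFSI ar Qs D" and hk: "hom ar SS D k"
  shows "(k (gen 3) = k (gen 0) \<and> (k (gen 1) = k (gen 2) \<or> k (gen 0) = k (gen 2))) \<or>
         (k (gen 3) = k (gen 2) \<and> k (gen 0) = k (gen 1))"
proof (cases "\<exists>a\<in>k ` carrier SS. \<exists>b\<in>k ` carrier SS. a \<noteq> b")
  case False
  then have "k (gen i) = k (gen 0)" for i using gen_in by blast
  then show ?thesis by metis
next
  case True
  let ?G = "D\<lparr>carrier := k ` carrier SS\<rparr>"
  let ?\<kappa> = "kerrel SS k"
  have su: "subuniverse ar D (k ` carrier SS)"
    unfolding subuniverse_def
  proof (intro conjI)
    show "k ` carrier SS \<subseteq> carrier D" using hk by (auto simp: hom_def)
    show "k ` carrier SS \<noteq> {}" using gen_in by blast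
    show "closed_set ar D (k ` carrier SS)" by (rule image_closed[OF alg_SS hk])
  qed
  have G: "RFSI ar Qs ?G"
    using sub[unfolded RFSI_sub_closed_def, rule_format, of D "k ` carrier SS"] D su True by blast
  have hG: "hom ar SS ?G k" using hk by (auto simp: hom_def)
  have sG: "k ` carrier SS = carrier ?G" by simp
  have e1: "kcong ar Qs SS (eta sg1)" "kcong ar Qs SS (eta sg2)" "kcong ar Qs SS (eta sg3)"
    using eta_kcong by (auto simp: Sig_def)
  have e12: "kcong ar Qs SS (eta sg1 \<inter> eta sg2)" by (rule kcong_Int2[OF e1(1,2)])
  have pr: "eta sg1 \<inter> eta sg2 \<subseteq> ?\<kappa> \<or> eta sg3 \<subseteq> ?\<kappa>"
    by (rule prime2[OF wfQ CD SS_in_qv G hG sG e12 e1(3) eta_int])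
  have ek: "k (gen a) = k (gen b)" if "(gen a, gen b) \<in> ?\<kappa>" for a b
    using that by (simp add: kerrel_def)
  have g: "(gen a, gen b) \<in> eta \<sigma>" if "\<sigma> \<in> Sig" "\<sigma> a = \<sigma> b" for \<sigma> a b
    using eta_gen that by blast
  have s1: "sg1 \<in> Sig" "sg2 \<in> Sig" "sg3 \<in> Sig" by (auto simp: Sig_def)
  show ?thesis
  proof (cases "eta sg3 \<subseteq> ?\<kappa>")
    case True
    have "k (gen 3) = k (gen 2)" using ek g[OF s1(3), of 3 2] True by (auto simp: sg3_def)
    moreover have "k (gen 0) = k (gen 1)" using ek g[OF s1(3), of 0 1] True by (auto simp: sg3_def)
    ultimately show ?thesis by blast
  next
    case False
    then have p12: "eta sg1 \<inter> eta sg2 \<subseteq> ?\<kappa>" using pr by blast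
    have "eta sg1 \<subseteq> ?\<kappa> \<or> eta sg2 \<subseteq> ?\<kappa>"
      by (rule prime2[OF wfQ CD SS_in_qv G hG sG e1(1,2) p12])
    then show ?thesis
    proof
      assume a: "eta sg1 \<subseteq> ?\<kappa>"
      have "k (gen 3) = k (gen 0)" using ek g[OF s1(1), of 3 0] a by (auto simp: sg1_def)
      moreover have "k (gen 1) = k (gen 2)" using ek g[OF s1(1), of 1 2] a by (auto simp: sg1_def)
      ultimately show ?thesis by blast
    next
      assume a: "eta sg2 \<subseteq> ?\<kappa>"
      have "k (gen 3) = k (gen 0)" using ek g[OF s1(2), of 3 0] a by (auto simp: sg2_def)
      moreover have "k (gen 0) = k (gen 2)" using ek g[OF s1(2), of 0 2] a by (auto simp: sg2_def)
      ultimately show ?thesis by blast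
    qed
  qed
qed

end

context ctx
begin

lemma sig_min3: "\<sigma> \<in> Sig \<Longrightarrow> \<sigma> (min n 3) = \<sigma> n"
  by (auto simp: Sig_def sg1_def sg2_def sg3_def min_def)

lemma sig3: "\<sigma> \<in> Sig \<Longrightarrow> \<sigma> 3 = Var 0"
  by (auto simp: Sig_def sg1_def sg2_def sg3_def)

lemma min3_cases: "min n (3::nat) = 0 \<or> min n 3 = 1 \<or> min n 3 = 2 \<or> min n 3 = 3"
  unfolding min_def by presburger

lemma min2_cases: "min n (2::nat) = 0 \<or> min n 2 = 1 \<or> min n 2 = 2"
  unfolding min_def by presburger

lemma SS_gen: "Sg ar SS {gen 0, gen 1, gen 2, gen 3} = carrier SS"
proof
  let ?X = "{gen 0, gen 1, gen 2, gen 3}"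
  have X: "?X \<subseteq> carrier SS" using gen_in by auto
  show "Sg ar SS ?X \<subseteq> carrier SS" by (rule Sg_props(2)[OF alg_SS X])
  show "carrier SS \<subseteq> Sg ar SS ?X"
  proof
    fix x assume "x \<in> carrier SS"
    then obtain s where s: "wf_trm ar s" "x = e (nf (Rs Sig) s)" unfolding SS_def TA_def by auto
    define \<rho> :: "nat \<Rightarrow> 'f trm" where "\<rho> n = Var (min n 3)" for n
    have w\<rho>: "\<And>n. wf_trm ar (\<rho> n)" by (simp add: \<rho>_def)
    have ev: "eval SS (\<lambda>n. e (nf (Rs Sig) (\<rho> n))) s = e (nf (Rs Sig) (subst \<rho> s))"
      unfolding SS_def by (rule TA_eval[OF tcong_Rs w\<rho> s(1)])
    have "Rs Sig (subst \<rho> s) s"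
      unfolding Rs_def
    proof
      fix \<sigma> assume \<sigma>: "\<sigma> \<in> Sig"
      have "subst \<sigma> (subst \<rho> s) = subst (\<lambda>n. \<sigma> (min n 3)) s" by (simp add: subst_subst \<rho>_def)
      also have "(\<lambda>n. \<sigma> (min n 3)) = \<sigma>" using sig_min3[OF \<sigma>] by (rule ext)
      finally show "keq (subst \<sigma> (subst \<rho> s)) (subst \<sigma> s)" using keq_refl by simp
    qed
    then have "e (nf (Rs Sig) (subst \<rho> s)) = x"
      using nf_eq[OF tcong_Rs wf_subst[of ar s \<rho>, OF s(1) w\<rho>] s(1)] s(2) by simp
    moreover have "eval SS (\<lambda>n. e (nf (Rs Sig) (\<rho> n))) s \<in> Sg ar SS ?X"
    proof (rule eval_closed[OF Sg_props(3)[OF alg_SS X] _ s(1)])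
      have "e (nf (Rs Sig) (\<rho> n)) = gen (min n 3)" for n by (simp add: \<rho>_def gen_def)
      moreover have "gen (min n 3) \<in> ?X" for n using min3_cases[of n] by auto
      ultimately have "e (nf (Rs Sig) (\<rho> n)) \<in> ?X" for n by simp
      then show "range (\<lambda>n. e (nf (Rs Sig) (\<rho> n))) \<subseteq> Sg ar SS ?X" using Sg_props(1)[OF alg_SS X] by blast
    qed
    ultimately show "x \<in> Sg ar SS ?X" using ev by simp
  qed
qed

definition S0 :: "('f, 'a) alg" where "S0 = SS\<lparr>carrier := Sg ar SS {gen 0, gen 1, gen 2}\<rparr>"

lemma X3: "{gen 0, gen 1, gen 2} \<subseteq> carrier SS" using gen_in by auto

lemma epi:
  assumes sub: "RFSI_sub_closed ar Qs TYPE('a)" and CD: "rel_CD ar Qs TYPE('a)"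
  shows "K_epi ar Qs S0 SS id"
  unfolding K_epi_def
proof (intro conjI allI impI)
  show "hom ar S0 SS id" unfolding hom_def S0_def using Sg_props(2)[OF alg_SS X3] by auto
  fix C :: "('f, 'a) alg" and g h
  assume a: "in_qv ar Qs C \<and> hom ar SS C g \<and> hom ar SS C h \<and> (\<forall>x\<in>carrier S0. g (id x) = h (id x))"
  then have C: "in_qv ar Qs C" and hg: "hom ar SS C g" and hh: "hom ar SS C h"
    and ag: "\<forall>x\<in>carrier S0. g x = h x" by auto
  have inS0: "gen 0 \<in> carrier S0" "gen 1 \<in> carrier S0" "gen 2 \<in> carrier S0"
    using Sg_props(1)[OF alg_SS X3] by (auto simp: S0_def)
  have g0: "g (gen 0) = h (gen 0)" and g1: "g (gen 1) = h (gen 1)" and g2: "g (gen 2) = h (gen 2)"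
    using ag inS0 by auto
  have g3: "g (gen 3) = h (gen 3)"
  proof (rule ccontr)
    assume ne: "g (gen 3) \<noteq> h (gen 3)"
    have c: "g (gen 3) \<in> carrier C" "h (gen 3) \<in> carrier C" using hg hh gen_in by (auto simp: hom_def)
    obtain \<phi> where ph: "kcong ar Qs C \<phi>" "(g (gen 3), h (gen 3)) \<notin> \<phi>" "RFSI ar Qs (qrep C \<phi>)"
      using max_RFSI[OF wfQ C c ne] by blast
    have algC: "algebra ar C" using C by (simp add: in_qv_def)
    have hr: "hom ar C (qrep C \<phi>) (rep \<phi>)" by (rule qrep_hom(1)[OF kcong_cong[OF ph(1)] algC])
    have hg': "hom ar SS (qrep C \<phi>) (rep \<phi> \<circ> g)" by (rule hom_comp[OF hg hr])
    have hh': "hom ar SS (qrep C \<phi>) (rep \<phi> \<circ> h)" by (rule hom_comp[OF hh hr])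
    have P1: "(rep \<phi> (g (gen 3)) = rep \<phi> (h (gen 0)) \<and> (rep \<phi> (h (gen 1)) = rep \<phi> (h (gen 2)) \<or> rep \<phi> (h (gen 0)) = rep \<phi> (h (gen 2)))) \<or>
         (rep \<phi> (g (gen 3)) = rep \<phi> (h (gen 2)) \<and> rep \<phi> (h (gen 0)) = rep \<phi> (h (gen 1)))"
      using Pk[OF sub CD ph(3) hg'] g0 g1 g2 by simp
    have P2: "(rep \<phi> (h (gen 3)) = rep \<phi> (h (gen 0)) \<and> (rep \<phi> (h (gen 1)) = rep \<phi> (h (gen 2)) \<or> rep \<phi> (h (gen 0)) = rep \<phi> (h (gen 2)))) \<or>
         (rep \<phi> (h (gen 3)) = rep \<phi> (h (gen 2)) \<and> rep \<phi> (h (gen 0)) = rep \<phi> (h (gen 1)))"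
      using Pk[OF sub CD ph(3) hh'] by simp
    have "rep \<phi> (g (gen 3)) = rep \<phi> (h (gen 3))" by (rule combin[OF P1 P2])
    then have "(g (gen 3), h (gen 3)) \<in> \<phi>" using rep_eq[OF kcong_equiv[OF ph(1)] c] by simp
    then show False using ph(2) by simp
  qed
  have "\<forall>y\<in>Sg ar SS {gen 0, gen 1, gen 2, gen 3}. g y = h y"
    by (rule equalizer[OF alg_SS hg hh]) (use gen_in g0 g1 g2 g3 in auto)
  then show "\<forall>y\<in>carrier SS. g y = h y" using SS_gen by simp
qed

lemma pixley:
  assumes sub: "RFSI_sub_closed ar Qs TYPE('a)" and CD: "rel_CD ar Qs TYPE('a)"
    and wES: "weak_ES ar Qs TYPE('a)"
  shows "\<exists>t. wf_trm ar t \<and> (\<forall>\<sigma>\<in>Sig. keq (Var 0) (subst (\<lambda>n. \<sigma> (min n 2)) t))"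
proof -
  let ?X = "{gen 0, gen 1, gen 2}"
  have S0c: "carrier S0 = Sg ar SS ?X" by (simp add: S0_def)
  have su: "subuniverse ar SS (Sg ar SS ?X)" unfolding subuniverse_def using Sg_props[OF alg_SS X3] by auto
  have iS0: "in_qv ar Qs S0" unfolding S0_def by (rule sub_in_qv[OF SS_in_qv su])
  have "Sg ar S0 ?X = carrier S0" using Sg_subalg[OF alg_SS X3] by (simp add: S0_def)
  moreover have "?X \<subseteq> carrier S0" using Sg_props(1)[OF alg_SS X3] by (simp add: S0_def)
  moreover have "finite ?X" by simp
  ultimately have fS0: "fin_gen ar S0" unfolding fin_gen_def by blast
  have "finite {gen 0, gen 1, gen 2, gen 3}" by simp
  then have fSS: "fin_gen ar SS" unfolding fin_gen_def using SS_gen gen_in by blast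
  have "id ` carrier S0 = carrier SS"
    using wES[unfolded weak_ES_def, rule_format, of S0 SS id] iS0 SS_in_qv fS0 fSS epi[OF sub CD] by blast
  then have g3: "gen 3 \<in> Sg ar SS ?X" using gen_in S0c by auto
  define v where "v n = gen (min n 2)" for n
  have "v n \<in> ?X" for n using min2_cases[of n] by (auto simp: v_def)
  moreover have "gen 0 = v 0" "gen 1 = v 1" "gen 2 = v 2" by (simp_all add: v_def)
  ultimately have rv: "range v = ?X" by (auto intro: range_eqI)
  have rvc: "range v \<subseteq> carrier SS" using rv X3 by simp
  obtain t where t: "wf_trm ar t" "gen 3 = eval SS v t" using Sg_eval[OF alg_SS rvc] g3 rv by auto
  define \<rho> :: "nat \<Rightarrow> 'f trm" where "\<rho> n = Var (min n 2)" for n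
  have w\<rho>: "\<And>n. wf_trm ar (\<rho> n)" by (simp add: \<rho>_def)
  have vv: "v = (\<lambda>n. e (nf (Rs Sig) (\<rho> n)))" by (simp add: v_def gen_def \<rho>_def fun_eq_iff)
  have "eval SS v t = e (nf (Rs Sig) (subst \<rho> t))"
    unfolding vv SS_def by (rule TA_eval[OF tcong_Rs w\<rho> t(1)])
  then have "e (nf (Rs Sig) (Var 3)) = e (nf (Rs Sig) (subst \<rho> t))" using t(2) by (simp add: gen_def)
  then have R: "Rs Sig (Var 3) (subst \<rho> t)"
    using nf_eq[OF tcong_Rs _ wf_subst[of ar t \<rho>, OF t(1) w\<rho>], of "Var 3"] by simp
  have "keq (Var 0) (subst (\<lambda>n. \<sigma> (min n 2)) t)" if \<sigma>: "\<sigma> \<in> Sig" for \<sigma>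
  proof -
    have "keq (subst \<sigma> (Var 3)) (subst \<sigma> (subst \<rho> t))" using R \<sigma> unfolding Rs_def by blast
    moreover have "subst \<sigma> (Var 3) = Var 0" using sig3[OF \<sigma>] by simp
    moreover have "subst \<sigma> (subst \<rho> t) = subst (\<lambda>n. \<sigma> (min n 2)) t" by (simp add: subst_subst \<rho>_def)
    ultimately show ?thesis by simp
  qed
  then show ?thesis using t(1) by blast
qed

end

definition PP :: "('f, 'b) alg \<Rightarrow> 'f trm \<Rightarrow> 'b \<Rightarrow> 'b \<Rightarrow> 'b \<Rightarrow> 'b" where
  "PP B t a b c = eval B (\<lambda>n. if n = 0 then a else if n = 1 then b else c) t"

lemma cong_sub: "congruence ar B \<theta> \<Longrightarrow> \<theta> \<subseteq> carrier B \<times> carrier B"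
  unfolding congruence_def equiv_def refl_on_def by blast
lemma cong_refl: "congruence ar B \<theta> \<Longrightarrow> x \<in> carrier B \<Longrightarrow> (x, x) \<in> \<theta>"
  unfolding congruence_def equiv_def refl_on_def by blast
lemma cong_sym: "congruence ar B \<theta> \<Longrightarrow> (x, y) \<in> \<theta> \<Longrightarrow> (y, x) \<in> \<theta>"
  unfolding congruence_def equiv_def sym_def by blast
lemma cong_trans: "congruence ar B \<theta> \<Longrightarrow> (x, y) \<in> \<theta> \<Longrightarrow> (y, z) \<in> \<theta> \<Longrightarrow> (x, z) \<in> \<theta>"
  unfolding congruence_def equiv_def trans_def by blast
lemma cong_compat: "congruence ar B \<theta> \<Longrightarrow> length xs = ar f \<Longrightarrow> length ys = ar f \<Longrightarrow>
    list_all2 (\<lambda>x y. (x, y) \<in> \<theta>) xs ys \<Longrightarrow> (oper B f xs, oper B f ys) \<in> \<theta>"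
  unfolding congruence_def by blast

lemma congruenceI:
  assumes "equiv (carrier B) \<theta>"
    and "\<And>f xs ys. length xs = ar f \<Longrightarrow> length ys = ar f \<Longrightarrow> list_all2 (\<lambda>x y. (x, y) \<in> \<theta>) xs ys \<Longrightarrow> (oper B f xs, oper B f ys) \<in> \<theta>"
  shows "congruence ar B \<theta>"
  using assms unfolding congruence_def by blast

lemma la2_comp:
  assumes "list_all2 (\<lambda>x y. (x, y) \<in> R O S) xs ys"
  shows "\<exists>zs. list_all2 (\<lambda>x y. (x, y) \<in> R) xs zs \<and> list_all2 (\<lambda>x y. (x, y) \<in> S) zs ys"
  using assms
proof (induction rule: list_all2_induct)
  case Nil then show ?case by simp
next
  case (Cons x xs y ys)
  obtain z where z: "(x, z) \<in> R" "(z, y) \<in> S" using Cons(1) by blast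
  obtain zs where zs: "list_all2 (\<lambda>x y. (x, y) \<in> R) xs zs" "list_all2 (\<lambda>x y. (x, y) \<in> S) zs ys"
    using Cons(3) by blast
  have "list_all2 (\<lambda>x y. (x, y) \<in> R) (x # xs) (z # zs)" using z zs by simp
  moreover have "list_all2 (\<lambda>x y. (x, y) \<in> S) (z # zs) (y # ys)" using z zs by simp
  ultimately show ?case by blast
qed

lemma cong_int:
  assumes x: "congruence ar B x" and y: "congruence ar B y"
  shows "congruence ar B (x \<inter> y)"
proof (rule congruenceI)
  have "equiv (carrier B) (\<Inter>{x, y})"
    by (rule equiv_Inter) (use x y in \<open>auto simp: congruence_def\<close>)
  then show "equiv (carrier B) (x \<inter> y)" by simp
  fix f xs ys assume l: "length xs = ar f" "length ys = ar f" and r: "list_all2 (\<lambda>a b. (a, b) \<in> x \<inter> y) xs ys"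
  have "list_all2 (\<lambda>a b. (a, b) \<in> x) xs ys" using r by (rule list_all2_mono) blast
  moreover have "list_all2 (\<lambda>a b. (a, b) \<in> y) xs ys" using r by (rule list_all2_mono) blast
  ultimately show "(oper B f xs, oper B f ys) \<in> x \<inter> y" using cong_compat[OF x l] cong_compat[OF y l] by blast
qed

locale pix =
  fixes ar :: "'f \<Rightarrow> nat" and B :: "('f, 'b) alg" and t :: "'f trm"
  assumes alg: "algebra ar B" and wt: "wf_trm ar t"
    and id1: "\<And>a b. a \<in> carrier B \<Longrightarrow> b \<in> carrier B \<Longrightarrow> PP B t a b b = a"
    and id2: "\<And>a b. a \<in> carrier B \<Longrightarrow> b \<in> carrier B \<Longrightarrow> PP B t a b a = a"
    and id3: "\<And>a b. a \<in> carrier B \<Longrightarrow> b \<in> carrier B \<Longrightarrow> PP B t b b a = a"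
begin

lemma Pc: "a \<in> carrier B \<Longrightarrow> b \<in> carrier B \<Longrightarrow> c \<in> carrier B \<Longrightarrow> PP B t a b c \<in> carrier B"
  unfolding PP_def using alg wt by (intro eval_closed) (auto simp: algebra_def)

lemma P\<theta>:
  assumes th: "congruence ar B \<theta>" and p: "(a, a') \<in> \<theta>" "(b, b') \<in> \<theta>" "(c, c') \<in> \<theta>"
  shows "(PP B t a b c, PP B t a' b' c') \<in> \<theta>"
  unfolding PP_def by (rule cong_eval[OF th _ wt]) (use p in auto)

lemma perm:
  assumes t1: "congruence ar B \<theta>1" and t2: "congruence ar B \<theta>2"
  shows "\<theta>1 O \<theta>2 \<subseteq> \<theta>2 O \<theta>1"
proof
  fix p assume "p \<in> \<theta>1 O \<theta>2"
  then obtain a b c where p: "p = (a, c)" and ab: "(a, b) \<in> \<theta>1" and bc: "(b, c) \<in> \<theta>2" by blast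
  have abc: "a \<in> carrier B" "b \<in> carrier B" "c \<in> carrier B" using cong_sub[OF t1] cong_sub[OF t2] ab bc by auto
  let ?d = "PP B t a b c"
  have "(?d, PP B t a b b) \<in> \<theta>2"
    by (rule P\<theta>[OF t2 cong_refl[OF t2 abc(1)] cong_refl[OF t2 abc(2)] cong_sym[OF t2 bc]])
  then have "(?d, a) \<in> \<theta>2" using id1[OF abc(1,2)] by simp
  then have ad: "(a, ?d) \<in> \<theta>2" by (rule cong_sym[OF t2])
  have "(?d, PP B t b b c) \<in> \<theta>1"
    by (rule P\<theta>[OF t1 ab cong_refl[OF t1 abc(2)] cong_refl[OF t1 abc(3)]])
  then have dc: "(?d, c) \<in> \<theta>1" using id3[OF abc(3,2)] by simp
  show "p \<in> \<theta>2 O \<theta>1" using ad dc p by blast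
qed

lemma perm_eq: "congruence ar B \<theta>1 \<Longrightarrow> congruence ar B \<theta>2 \<Longrightarrow> \<theta>1 O \<theta>2 = \<theta>2 O \<theta>1"
  using perm by blast

lemma comp_cong:
  assumes t1: "congruence ar B \<theta>1" and t2: "congruence ar B \<theta>2"
  shows "congruence ar B (\<theta>1 O \<theta>2)"
proof (rule congruenceI)
  have s1: "\<theta>1 \<subseteq> carrier B \<times> carrier B" and s2: "\<theta>2 \<subseteq> carrier B \<times> carrier B"
    using cong_sub[OF t1] cong_sub[OF t2] .
  have pe: "\<theta>2 O \<theta>1 = \<theta>1 O \<theta>2" using perm_eq[OF t2 t1] .
  show "equiv (carrier B) (\<theta>1 O \<theta>2)"
    unfolding equiv_def refl_on_def sym_def trans_def
  proof (intro conjI allI impI ballI)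
    show "\<theta>1 O \<theta>2 \<subseteq> carrier B \<times> carrier B" using s1 s2 by blast
  next
    fix x assume "x \<in> carrier B"
    then show "(x, x) \<in> \<theta>1 O \<theta>2" using cong_refl[OF t1] cong_refl[OF t2] by blast
  next
    fix x y assume "(x, y) \<in> \<theta>1 O \<theta>2"
    then obtain z where "(x, z) \<in> \<theta>1" "(z, y) \<in> \<theta>2" by blast
    then have "(y, z) \<in> \<theta>2" "(z, x) \<in> \<theta>1" using cong_sym[OF t1] cong_sym[OF t2] by auto
    then have "(y, x) \<in> \<theta>2 O \<theta>1" by blast
    then show "(y, x) \<in> \<theta>1 O \<theta>2" using pe by simp
  next
    fix x y z assume xy: "(x, y) \<in> \<theta>1 O \<theta>2" and yz: "(y, z) \<in> \<theta>1 O \<theta>2"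
    obtain b where b: "(x, b) \<in> \<theta>1" "(b, y) \<in> \<theta>2" using xy by blast
    obtain d where d: "(y, d) \<in> \<theta>1" "(d, z) \<in> \<theta>2" using yz by blast
    have "(b, d) \<in> \<theta>2 O \<theta>1" using b(2) d(1) by blast
    then have "(b, d) \<in> \<theta>1 O \<theta>2" using pe by simp
    then obtain b' where b': "(b, b') \<in> \<theta>1" "(b', d) \<in> \<theta>2" by blast
    have "(x, b') \<in> \<theta>1" using cong_trans[OF t1 b(1) b'(1)] .
    moreover have "(b', z) \<in> \<theta>2" using cong_trans[OF t2 b'(2) d(2)] .
    ultimately show "(x, z) \<in> \<theta>1 O \<theta>2" by blast
  qed
next
  fix f xs ys assume l: "length xs = ar f" "length ys = ar f" and r: "list_all2 (\<lambda>x y. (x, y) \<in> \<theta>1 O \<theta>2) xs ys"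
  obtain zs where zs: "list_all2 (\<lambda>x y. (x, y) \<in> \<theta>1) xs zs" "list_all2 (\<lambda>x y. (x, y) \<in> \<theta>2) zs ys"
    using la2_comp[OF r] by blast
  have lz: "length zs = ar f" using list_all2_lengthD[OF zs(1)] l by simp
  have "(oper B f xs, oper B f zs) \<in> \<theta>1" by (rule cong_compat[OF t1 l(1) lz zs(1)])
  moreover have "(oper B f zs, oper B f ys) \<in> \<theta>2" by (rule cong_compat[OF t2 lz l(2) zs(2)])
  ultimately show "(oper B f xs, oper B f ys) \<in> \<theta>1 O \<theta>2" by blast
qed

lemma join_eq:
  assumes t1: "congruence ar B \<theta>1" and t2: "congruence ar B \<theta>2"
  shows "lat_join (Con ar B) \<theta>1 \<theta>2 = \<theta>1 O \<theta>2"
proof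
  have "\<theta>1 O \<theta>2 \<in> Con ar B" using comp_cong[OF t1 t2] by (simp add: Con_def)
  moreover have "\<theta>1 \<union> \<theta>2 \<subseteq> \<theta>1 O \<theta>2"
  proof
    fix p assume p: "p \<in> \<theta>1 \<union> \<theta>2"
    obtain x y where xy: "p = (x, y)" by (cases p)
    have c: "x \<in> carrier B" "y \<in> carrier B" using p xy cong_sub[OF t1] cong_sub[OF t2] by auto
    show "p \<in> \<theta>1 O \<theta>2"
      using p xy cong_refl[OF t1 c(1)] cong_refl[OF t2 c(2)] by blast
  qed
  ultimately show "lat_join (Con ar B) \<theta>1 \<theta>2 \<subseteq> \<theta>1 O \<theta>2" by (rule lat_join_least)
  show "\<theta>1 O \<theta>2 \<subseteq> lat_join (Con ar B) \<theta>1 \<theta>2"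
    unfolding lat_join_def
  proof (rule Inter_greatest)
    fix z assume "z \<in> {z \<in> Con ar B. \<theta>1 \<union> \<theta>2 \<subseteq> z}"
    then have zc: "congruence ar B z" and sz: "\<theta>1 \<union> \<theta>2 \<subseteq> z" by (auto simp: Con_def)
    show "\<theta>1 O \<theta>2 \<subseteq> z"
    proof
      fix p assume "p \<in> \<theta>1 O \<theta>2"
      then obtain a b c where "p = (a, c)" "(a, b) \<in> \<theta>1" "(b, c) \<in> \<theta>2" by blast
      then show "p \<in> z" using sz cong_trans[OF zc] by blast
    qed
  qed
qed

lemma distrib_main:
  assumes x: "congruence ar B x" and y: "congruence ar B y" and z: "congruence ar B z"
  shows "x \<inter> (y O z) = (x \<inter> y) O (x \<inter> z)"
proof
  show "(x \<inter> y) O (x \<inter> z) \<subseteq> x \<inter> (y O z)"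
    using cong_trans[OF x] by blast
  show "x \<inter> (y O z) \<subseteq> (x \<inter> y) O (x \<inter> z)"
  proof
    fix p assume p: "p \<in> x \<inter> (y O z)"
    then obtain a b c where pp: "p = (a, c)" and ac: "(a, c) \<in> x" and ab: "(a, b) \<in> y" and bc: "(b, c) \<in> z" by blast
    have abc: "a \<in> carrier B" "b \<in> carrier B" "c \<in> carrier B" using cong_sub[OF y] cong_sub[OF z] ab bc by auto
    let ?q = "PP B t a b c"
    let ?m = "PP B t a ?q c"
    have qc: "?q \<in> carrier B" using Pc[OF abc] .
    have ca: "(c, a) \<in> x" using cong_sym[OF x ac] .
    have "(?q, PP B t a b a) \<in> x" by (rule P\<theta>[OF x cong_refl[OF x abc(1)] cong_refl[OF x abc(2)] ca])
    then have qx: "(?q, a) \<in> x" using id2[OF abc(1,2)] by simp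
    have "(?m, PP B t a a a) \<in> x" by (rule P\<theta>[OF x cong_refl[OF x abc(1)] qx ca])
    then have m1: "(?m, a) \<in> x" using id1[OF abc(1) abc(1)] by simp
    have "(?q, PP B t a a c) \<in> y" by (rule P\<theta>[OF y cong_refl[OF y abc(1)] cong_sym[OF y ab] cong_refl[OF y abc(3)]])
    then have qy: "(?q, c) \<in> y" using id3[OF abc(3) abc(1)] by simp
    have "(?m, PP B t a c c) \<in> y" by (rule P\<theta>[OF y cong_refl[OF y abc(1)] qy cong_refl[OF y abc(3)]])
    then have m2: "(?m, a) \<in> y" using id1[OF abc(1) abc(3)] by simp
    have "(?q, PP B t a c c) \<in> z" by (rule P\<theta>[OF z cong_refl[OF z abc(1)] bc cong_refl[OF z abc(3)]])
    then have qz: "(?q, a) \<in> z" using id1[OF abc(1) abc(3)] by simp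
    have "(?m, PP B t a a c) \<in> z" by (rule P\<theta>[OF z cong_refl[OF z abc(1)] qz cong_refl[OF z abc(3)]])
    then have m3: "(?m, c) \<in> z" using id3[OF abc(3) abc(1)] by simp
    have "(?q, PP B t c b c) \<in> x" by (rule P\<theta>[OF x ac cong_refl[OF x abc(2)] cong_refl[OF x abc(3)]])
    then have qx2: "(?q, c) \<in> x" using id2[OF abc(3,2)] by simp
    have "(?m, PP B t c c c) \<in> x" by (rule P\<theta>[OF x ac qx2 cong_refl[OF x abc(3)]])
    then have m4: "(?m, c) \<in> x" using id1[OF abc(3) abc(3)] by simp
    have "(a, ?m) \<in> x \<inter> y" using cong_sym[OF x m1] cong_sym[OF y m2] by blast
    moreover have "(?m, c) \<in> x \<inter> z" using m4 m3 by blast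
    ultimately show "p \<in> (x \<inter> y) O (x \<inter> z)" using pp by blast
  qed
qed

lemma arith: "distrib_family (Con ar B) \<and> (\<forall>\<theta>1\<in>Con ar B. \<forall>\<theta>2\<in>Con ar B. \<theta>1 O \<theta>2 = \<theta>2 O \<theta>1)"
proof
  show "\<forall>\<theta>1\<in>Con ar B. \<forall>\<theta>2\<in>Con ar B. \<theta>1 O \<theta>2 = \<theta>2 O \<theta>1"
    using perm_eq by (auto simp: Con_def)
  show "distrib_family (Con ar B)"
    unfolding distrib_family_def
  proof (intro ballI)
    fix x y z assume "x \<in> Con ar B" "y \<in> Con ar B" "z \<in> Con ar B"
    then have c: "congruence ar B x" "congruence ar B y" "congruence ar B z" by (auto simp: Con_def)
    have "x \<inter> lat_join (Con ar B) y z = x \<inter> (y O z)" using join_eq[OF c(2,3)] by simp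
    also have "\<dots> = (x \<inter> y) O (x \<inter> z)" by (rule distrib_main[OF c])
    also have "\<dots> = lat_join (Con ar B) (x \<inter> y) (x \<inter> z)"
      using join_eq[OF cong_int[OF c(1,2)] cong_int[OF c(1,3)]] by simp
    finally show "x \<inter> lat_join (Con ar B) y z = lat_join (Con ar B) (x \<inter> y) (x \<inter> z)" .
  qed
qed

end

theorem mainTheorem16:
  fixes ar :: "'f \<Rightarrow> nat" and Qs :: "'f qid set"
  assumes "\<forall>q\<in>Qs. wf_qid ar q"
    and "\<exists>e :: 'f trm \<Rightarrow> 'a. inj e"
    and "rel_CD ar Qs TYPE('a)"
    and "RFSI_sub_closed ar Qs TYPE('a)"
    and "weak_ES ar Qs TYPE('a)"
  shows "\<forall>B :: ('f, 'b) alg. in_var_gen ar Qs TYPE('a) B \<longrightarrow>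
           distrib_family (Con ar B) \<and>
           (\<forall>\<theta>1\<in>Con ar B. \<forall>\<theta>2\<in>Con ar B. \<theta>1 O \<theta>2 = \<theta>2 O \<theta>1)"
proof -
  obtain e :: "'f trm \<Rightarrow> 'a" where inj: "inj e" using assms(2) by blast
  interpret C: ctx ar Qs e using assms(1) inj by unfold_locales
  obtain t where t: "wf_trm ar t" "\<forall>\<sigma>\<in>C.Sig. C.keq (Var 0) (subst (\<lambda>n. \<sigma> (min n 2)) t)"
    using C.pixley[OF assms(4) assms(3) assms(5)] by blast
  show ?thesis
  proof (intro allI impI)
    fix B :: "('f, 'b) alg" assume vB: "in_var_gen ar Qs TYPE('a) B"
    have algB: "algebra ar B" using vB by (simp add: in_var_gen_def)
    have ident: "eval B w (subst (\<lambda>n. \<sigma> (min n 2)) t) = w 0"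
      if s: "\<sigma> \<in> C.Sig" and w: "range w \<subseteq> carrier B" for \<sigma> w
    proof -
      let ?s = "subst (\<lambda>n. \<sigma> (min n 2)) t"
      have k: "C.keq ?s (Var 0)" using C.keq_sym t(2) s by blast
      have ws: "wf_trm ar ?s" using C.sig_wf s t(1) by (intro wf_subst) auto
      have "\<forall>A :: ('f, 'a) alg. in_qv ar Qs A \<longrightarrow> sat_qid A ([], (?s, Var 0))"
        using k unfolding C.keq_def .
      then have "sat_qid B ([], (?s, Var 0))"
        using vB ws unfolding in_var_gen_def by simp
      then show ?thesis using w unfolding sat_qid_def by simp
    qed
    have sg: "C.sg1 \<in> C.Sig" "C.sg2 \<in> C.Sig" "C.sg3 \<in> C.Sig" by (auto simp: C.Sig_def)
    have pix: "pix ar B t"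
    proof
      show "algebra ar B" by (rule algB)
      show "wf_trm ar t" by (rule t(1))
      fix a b assume ab: "a \<in> carrier B" "b \<in> carrier B"
      define w where "w n = (if n = 0 then a else b)" for n :: nat
      have w: "range w \<subseteq> carrier B" using ab by (auto simp: w_def)
      have "eval B w (subst (\<lambda>n. C.sg1 (min n 2)) t) = a" using ident[OF sg(1) w] by (simp add: w_def)
      moreover have "(\<lambda>n. eval B w (C.sg1 (min n 2))) = (\<lambda>n. if n = 0 then a else if n = 1 then b else b)"
        by (auto simp: fun_eq_iff C.sg1_def w_def min_def)
      ultimately show "PP B t a b b = a" unfolding PP_def by (simp add: eval_subst)
      have "eval B w (subst (\<lambda>n. C.sg2 (min n 2)) t) = a" using ident[OF sg(2) w] by (simp add: w_def)
      moreover have "(\<lambda>n. eval B w (C.sg2 (min n 2))) = (\<lambda>n. if n = 0 then a else if n = 1 then b else a)"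
        by (auto simp: fun_eq_iff C.sg2_def w_def min_def)
      ultimately show "PP B t a b a = a" unfolding PP_def by (simp add: eval_subst)
      have "eval B w (subst (\<lambda>n. C.sg3 (min n 2)) t) = a" using ident[OF sg(3) w] by (simp add: w_def)
      moreover have "(\<lambda>n. eval B w (C.sg3 (min n 2))) = (\<lambda>n. if n = 0 then b else if n = 1 then b else a)"
        by (auto simp: fun_eq_iff C.sg3_def w_def min_def)
      ultimately show "PP B t b b a = a" unfolding PP_def by (simp add: eval_subst)
    qed
    show "distrib_family (Con ar B) \<and> (\<forall>\<theta>1\<in>Con ar B. \<forall>\<theta>2\<in>Con ar B. \<theta>1 O \<theta>2 = \<theta>2 O \<theta>1)"
      by (rule pix.arith[OF pix])
  qed
qed

end
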